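(* Let $\mathcal{C}$ and $\mathcal{D}$ be $*$-categories. If $\mathcal{D}$ is a pre-Hilbert $*$-category, then $[\mathcal{C},\mathcal{D}]_*$ is also a pre-Hilbert $*$-category.
   Context: A $*$-category is a category with a choice of $f^*\colon Y\to X$ for each $f\colon X\to Y$ such that $1^*=1$, $(gf)^*=f^*g^*$, $(f^* )^*=f$; $f$ is an isometry if $f^*f=1$. A $*$-functor is a functor $F$ between $*$-categories with $F(f^* )=(Ff)^*$. $[\mathcal{C},\mathcal{D}]_*$ is the full subcategory of the functor category $[\mathcal{C},\mathcal{D}]$ on the $*$-functors, made into a $*$-category by the componentwise involution $(\sigma^* )_X=(\sigma_X)^*$ for natural transformations $\sigma$. A pre-Hilbert $*$-category is a $*$-category in which (R1) there is a zero object, (R2) every pair of objects has an orthonormal biproduct (a biproduct $(X,s_1,r_1,s_2,r_2)$ with $r_k=s_k^*$), (R3) every morphism has an isometric kernel (an equaliser with the zero morphism that is an isometry), and (R4) every diagonal $\Delta\colon X\to X\oplus X$ is a normal monomorphism (a kernel of some morphism). *)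

theory Defs
  imports Main
begin

text \<open>A category: objects, arrows, domain, codomain, identities and composition
  (c_comp g f means g after f).  A *-category additionally carries an involution.\<close>

record ('o, 'a) cat =
  c_obj  :: "'o set"
  c_arr  :: "'a set"
  c_dom  :: "'a \<Rightarrow> 'o"
  c_cod  :: "'a \<Rightarrow> 'o"
  c_id   :: "'o \<Rightarrow> 'a"
  c_comp :: "'a \<Rightarrow> 'a \<Rightarrow> 'a"

record ('o, 'a) star_cat = "('o, 'a) cat" +
  c_star :: "'a \<Rightarrow> 'a"

definition hom :: "('o, 'a, 'm) cat_scheme \<Rightarrow> 'o \<Rightarrow> 'o \<Rightarrow> 'a set" where
  "hom C X Y = {f \<in> c_arr C. c_dom C f = X \<and> c_cod C f = Y}"

definition category :: "('o, 'a, 'm) cat_scheme \<Rightarrow> bool" where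
  "category C \<longleftrightarrow>
     (\<forall>f \<in> c_arr C. c_dom C f \<in> c_obj C \<and> c_cod C f \<in> c_obj C) \<and>
     (\<forall>X \<in> c_obj C. c_id C X \<in> hom C X X) \<and>
     (\<forall>f g. f \<in> c_arr C \<longrightarrow> g \<in> c_arr C \<longrightarrow> c_cod C f = c_dom C g \<longrightarrow>
        c_comp C g f \<in> hom C (c_dom C f) (c_cod C g)) \<and>
     (\<forall>f \<in> c_arr C. c_comp C (c_id C (c_cod C f)) f = f \<and> c_comp C f (c_id C (c_dom C f)) = f) \<and>
     (\<forall>f g h. f \<in> c_arr C \<longrightarrow> g \<in> c_arr C \<longrightarrow> h \<in> c_arr C \<longrightarrow>
        c_cod C f = c_dom C g \<longrightarrow> c_cod C g = c_dom C h \<longrightarrow>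
        c_comp C h (c_comp C g f) = c_comp C (c_comp C h g) f)"

definition star_category :: "('o, 'a, 'm) star_cat_scheme \<Rightarrow> bool" where
  "star_category C \<longleftrightarrow> category C \<and>
     (\<forall>f \<in> c_arr C. c_star C f \<in> hom C (c_cod C f) (c_dom C f)) \<and>
     (\<forall>X \<in> c_obj C. c_star C (c_id C X) = c_id C X) \<and>
     (\<forall>f g. f \<in> c_arr C \<longrightarrow> g \<in> c_arr C \<longrightarrow> c_cod C f = c_dom C g \<longrightarrow>
        c_star C (c_comp C g f) = c_comp C (c_star C f) (c_star C g)) \<and>
     (\<forall>f \<in> c_arr C. c_star C (c_star C f) = f)"

definition isometry :: "('o, 'a, 'm) star_cat_scheme \<Rightarrow> 'a \<Rightarrow> bool" where
  "isometry C f \<longleftrightarrow> f \<in> c_arr C \<and> c_comp C (c_star C f) f = c_id C (c_dom C f)"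

text \<open>A functor is a pair (object map, arrow map); maps are extensional
  (undefined outside the objects/arrows of the source), so that functors are determined
  by their action on C.\<close>

type_synonym ('o1, 'a1, 'o2, 'a2) functr = "('o1 \<Rightarrow> 'o2) \<times> ('a1 \<Rightarrow> 'a2)"

definition is_functor ::
  "('o1, 'a1, 'm1) cat_scheme \<Rightarrow> ('o2, 'a2, 'm2) cat_scheme \<Rightarrow> ('o1, 'a1, 'o2, 'a2) functr \<Rightarrow> bool" where
  "is_functor C D F \<longleftrightarrow>
     (\<forall>X \<in> c_obj C. fst F X \<in> c_obj D \<and> snd F (c_id C X) = c_id D (fst F X)) \<and>
     (\<forall>f \<in> c_arr C. snd F f \<in> hom D (fst F (c_dom C f)) (fst F (c_cod C f))) \<and>
     (\<forall>f g. f \<in> c_arr C \<longrightarrow> g \<in> c_arr C \<longrightarrow> c_cod C f = c_dom C g \<longrightarrow>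
        snd F (c_comp C g f) = c_comp D (snd F g) (snd F f)) \<and>
     (\<forall>X. X \<notin> c_obj C \<longrightarrow> fst F X = undefined) \<and>
     (\<forall>f. f \<notin> c_arr C \<longrightarrow> snd F f = undefined)"

definition star_functor ::
  "('o1, 'a1, 'm1) star_cat_scheme \<Rightarrow> ('o2, 'a2, 'm2) star_cat_scheme \<Rightarrow> ('o1, 'a1, 'o2, 'a2) functr \<Rightarrow> bool" where
  "star_functor C D F \<longleftrightarrow> is_functor C D F \<and>
     (\<forall>f \<in> c_arr C. snd F (c_star C f) = c_star D (snd F f))"

definition nat_trans ::
  "('o1, 'a1, 'm1) cat_scheme \<Rightarrow> ('o2, 'a2, 'm2) cat_scheme \<Rightarrow>
   ('o1, 'a1, 'o2, 'a2) functr \<Rightarrow> ('o1, 'a1, 'o2, 'a2) functr \<Rightarrow> ('o1 \<Rightarrow> 'a2) \<Rightarrow> bool" where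
  "nat_trans C D F G \<sigma> \<longleftrightarrow> is_functor C D F \<and> is_functor C D G \<and>
     (\<forall>X \<in> c_obj C. \<sigma> X \<in> hom D (fst F X) (fst G X)) \<and>
     (\<forall>f \<in> c_arr C. c_comp D (\<sigma> (c_cod C f)) (snd F f) = c_comp D (snd G f) (\<sigma> (c_dom C f))) \<and>
     (\<forall>X. X \<notin> c_obj C \<longrightarrow> \<sigma> X = undefined)"

definition functor_star_cat ::
  "('o1, 'a1, 'm1) star_cat_scheme \<Rightarrow> ('o2, 'a2, 'm2) star_cat_scheme \<Rightarrow>
   (('o1, 'a1, 'o2, 'a2) functr,
    ('o1, 'a1, 'o2, 'a2) functr \<times> ('o1, 'a1, 'o2, 'a2) functr \<times> ('o1 \<Rightarrow> 'a2)) star_cat" where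
  "functor_star_cat C D = \<lparr>
     c_obj = {F. star_functor C D F},
     c_arr = {(F, G, \<sigma>). star_functor C D F \<and> star_functor C D G \<and> nat_trans C D F G \<sigma>},
     c_dom = (\<lambda>(F, G, \<sigma>). F),
     c_cod = (\<lambda>(F, G, \<sigma>). G),
     c_id = (\<lambda>F. (F, F, \<lambda>X. if X \<in> c_obj C then c_id D (fst F X) else undefined)),
     c_comp = (\<lambda>(G', H, \<tau>) (F, G, \<sigma>).
                 (F, H, \<lambda>X. if X \<in> c_obj C then c_comp D (\<tau> X) (\<sigma> X) else undefined)),
     c_star = (\<lambda>(F, G, \<sigma>). (G, F, \<lambda>X. if X \<in> c_obj C then c_star D (\<sigma> X) else undefined)) \<rparr>"

definition zero_obj :: "('o, 'a, 'm) cat_scheme \<Rightarrow> 'o \<Rightarrow> bool" where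
  "zero_obj C Z \<longleftrightarrow> Z \<in> c_obj C \<and>
     (\<forall>X \<in> c_obj C. (\<exists>!f. f \<in> hom C Z X) \<and> (\<exists>!f. f \<in> hom C X Z))"

definition zero_arr :: "('o, 'a, 'm) cat_scheme \<Rightarrow> 'a \<Rightarrow> bool" where
  "zero_arr C f \<longleftrightarrow> f \<in> c_arr C \<and>
     (\<exists>Z g h. zero_obj C Z \<and> g \<in> hom C (c_dom C f) Z \<and> h \<in> hom C Z (c_cod C f) \<and>
        f = c_comp C h g)"

definition biproduct :: "('o, 'a, 'm) cat_scheme \<Rightarrow> 'o \<Rightarrow> 'o \<Rightarrow> 'o \<Rightarrow> 'a \<Rightarrow> 'a \<Rightarrow> 'a \<Rightarrow> 'a \<Rightarrow> bool" where
  "biproduct C X1 X2 X s1 r1 s2 r2 \<longleftrightarrow>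
     s1 \<in> hom C X1 X \<and> r1 \<in> hom C X X1 \<and> s2 \<in> hom C X2 X \<and> r2 \<in> hom C X X2 \<and>
     c_comp C r1 s1 = c_id C X1 \<and> c_comp C r2 s2 = c_id C X2 \<and>
     zero_arr C (c_comp C r2 s1) \<and> zero_arr C (c_comp C r1 s2) \<and>
     (\<forall>W f1 f2. f1 \<in> hom C W X1 \<longrightarrow> f2 \<in> hom C W X2 \<longrightarrow>
        (\<exists>!h. h \<in> hom C W X \<and> c_comp C r1 h = f1 \<and> c_comp C r2 h = f2)) \<and>
     (\<forall>W g1 g2. g1 \<in> hom C X1 W \<longrightarrow> g2 \<in> hom C X2 W \<longrightarrow>
        (\<exists>!h. h \<in> hom C X W \<and> c_comp C h s1 = g1 \<and> c_comp C h s2 = g2))"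

definition orthonormal_biproduct ::
  "('o, 'a, 'm) star_cat_scheme \<Rightarrow> 'o \<Rightarrow> 'o \<Rightarrow> 'o \<Rightarrow> 'a \<Rightarrow> 'a \<Rightarrow> 'a \<Rightarrow> 'a \<Rightarrow> bool" where
  "orthonormal_biproduct C X1 X2 X s1 r1 s2 r2 \<longleftrightarrow>
     biproduct C X1 X2 X s1 r1 s2 r2 \<and> r1 = c_star C s1 \<and> r2 = c_star C s2"

definition is_kernel :: "('o, 'a, 'm) cat_scheme \<Rightarrow> 'a \<Rightarrow> 'a \<Rightarrow> bool" where
  "is_kernel C f k \<longleftrightarrow> f \<in> c_arr C \<and> k \<in> c_arr C \<and> c_cod C k = c_dom C f \<and>
     zero_arr C (c_comp C f k) \<and>
     (\<forall>g. g \<in> c_arr C \<longrightarrow> c_cod C g = c_dom C f \<longrightarrow> zero_arr C (c_comp C f g) \<longrightarrow>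
        (\<exists>!h. h \<in> hom C (c_dom C g) (c_dom C k) \<and> c_comp C k h = g))"

definition normal_mono :: "('o, 'a, 'm) cat_scheme \<Rightarrow> 'a \<Rightarrow> bool" where
  "normal_mono C m \<longleftrightarrow> (\<exists>f. is_kernel C f m)"

definition pre_hilbert :: "('o, 'a, 'm) star_cat_scheme \<Rightarrow> bool" where
  "pre_hilbert C \<longleftrightarrow> star_category C \<and>
     \<comment> \<open>(R1)\<close>
     (\<exists>Z. zero_obj C Z) \<and>
     \<comment> \<open>(R2)\<close>
     (\<forall>X1 \<in> c_obj C. \<forall>X2 \<in> c_obj C. \<exists>X s1 r1 s2 r2. orthonormal_biproduct C X1 X2 X s1 r1 s2 r2) \<and>
     \<comment> \<open>(R3)\<close>
     (\<forall>f \<in> c_arr C. \<exists>k. is_kernel C f k \<and> isometry C k) \<and>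
     \<comment> \<open>(R4): the diagonal of every orthonormal biproduct X (+) X\<close>
     (\<forall>X \<in> c_obj C. \<forall>P s1 r1 s2 r2 d.
        orthonormal_biproduct C X X P s1 r1 s2 r2 \<longrightarrow> d \<in> hom C X P \<longrightarrow>
        c_comp C r1 d = c_id C X \<longrightarrow> c_comp C r2 d = c_id C X \<longrightarrow> normal_mono C d)"

end

theory Submission
  imports Defs
begin
locale catl =
  fixes C :: "('o, 'a, 'm) cat_scheme"
  assumes cat: "category C"
begin

lemma hom_arr: "f \<in> hom C X Y \<Longrightarrow> f \<in> c_arr C" by (simp add: hom_def)
lemma hom_dom: "f \<in> hom C X Y \<Longrightarrow> c_dom C f = X" by (simp add: hom_def)
lemma hom_cod: "f \<in> hom C X Y \<Longrightarrow> c_cod C f = Y" by (simp add: hom_def)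
lemma arr_hom: "f \<in> c_arr C \<Longrightarrow> f \<in> hom C (c_dom C f) (c_cod C f)" by (simp add: hom_def)
lemma hom_objs: "f \<in> hom C X Y \<Longrightarrow> X \<in> c_obj C \<and> Y \<in> c_obj C"
  using cat unfolding category_def hom_def by auto
lemma id_hom: "X \<in> c_obj C \<Longrightarrow> c_id C X \<in> hom C X X"
  using cat unfolding category_def by auto
lemma comp_hom: "f \<in> hom C X Y \<Longrightarrow> g \<in> hom C Y Z \<Longrightarrow> c_comp C g f \<in> hom C X Z"
  using cat unfolding category_def hom_def by auto
lemma id_l: "f \<in> hom C X Y \<Longrightarrow> c_comp C (c_id C Y) f = f"
  using cat unfolding category_def hom_def by auto
lemma id_r: "f \<in> hom C X Y \<Longrightarrow> c_comp C f (c_id C X) = f"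
  using cat unfolding category_def hom_def by auto
lemma assoc: "f \<in> hom C X Y \<Longrightarrow> g \<in> hom C Y Z \<Longrightarrow> h \<in> hom C Z W \<Longrightarrow>
   c_comp C h (c_comp C g f) = c_comp C (c_comp C h g) f"
  using cat unfolding category_def hom_def by auto

lemma zero_obj_uniq_in: "zero_obj C Z \<Longrightarrow> f \<in> hom C Z X \<Longrightarrow> g \<in> hom C Z X \<Longrightarrow> f = g"
  unfolding zero_obj_def using hom_objs by blast
lemma zero_obj_uniq_out: "zero_obj C Z \<Longrightarrow> f \<in> hom C X Z \<Longrightarrow> g \<in> hom C X Z \<Longrightarrow> f = g"
  unfolding zero_obj_def using hom_objs by blast
lemma zero_obj_in: "zero_obj C Z \<Longrightarrow> X \<in> c_obj C \<Longrightarrow> \<exists>f. f \<in> hom C Z X"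
  unfolding zero_obj_def by blast
lemma zero_obj_out: "zero_obj C Z \<Longrightarrow> X \<in> c_obj C \<Longrightarrow> \<exists>f. f \<in> hom C X Z"
  unfolding zero_obj_def by blast
lemma zero_obj_obj: "zero_obj C Z \<Longrightarrow> Z \<in> c_obj C"
  unfolding zero_obj_def by blast

lemma zero_arr_intro: "zero_obj C Z \<Longrightarrow> g \<in> hom C X Z \<Longrightarrow> h \<in> hom C Z Y \<Longrightarrow> zero_arr C (c_comp C h g)"
proof -
  assume a: "zero_obj C Z" "g \<in> hom C X Z" "h \<in> hom C Z Y"
  have c: "c_comp C h g \<in> hom C X Y" using comp_hom a by blast
  then have "c_dom C (c_comp C h g) = X" "c_cod C (c_comp C h g) = Y" using hom_dom hom_cod by auto
  then show ?thesis unfolding zero_arr_def using a c hom_arr by auto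
qed

lemma zero_arr_hom: "zero_arr C f \<Longrightarrow> f \<in> hom C (c_dom C f) (c_cod C f)"
  unfolding zero_arr_def by (simp add: arr_hom)

lemma zero_arr_factor:
  assumes "zero_arr C f" "zero_obj C Z"
  shows "\<exists>g h. g \<in> hom C (c_dom C f) Z \<and> h \<in> hom C Z (c_cod C f) \<and> f = c_comp C h g"
proof -
  obtain Z' g h where Z': "zero_obj C Z'" and g: "g \<in> hom C (c_dom C f) Z'"
    and h: "h \<in> hom C Z' (c_cod C f)" and f: "f = c_comp C h g"
    using assms(1) unfolding zero_arr_def by blast
  obtain u where u: "u \<in> hom C Z' Z" using zero_obj_out[OF assms(2)] zero_obj_obj[OF Z'] by blast
  obtain v where v: "v \<in> hom C Z Z'" using zero_obj_out[OF Z'] zero_obj_obj[OF assms(2)] by blast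
  have vu: "c_comp C v u = c_id C Z'"
    using zero_obj_uniq_in[OF Z' comp_hom[OF u v] id_hom[OF zero_obj_obj[OF Z']]] .
  have "f = c_comp C h (c_comp C (c_comp C v u) g)" using f vu id_l[OF g] by simp
  also have "\<dots> = c_comp C (c_comp C h v) (c_comp C u g)"
    using assoc[OF g u v] assoc[OF comp_hom[OF g u] v h] by simp
  finally show ?thesis using comp_hom[OF g u] comp_hom[OF v h] by blast
qed

lemma zero_unique:
  assumes "zero_arr C f" "zero_arr C g" "f \<in> hom C X Y" "g \<in> hom C X Y"
  shows "f = g"
proof -
  obtain Z where Z: "zero_obj C Z" using assms(1) unfolding zero_arr_def by blast
  have d: "c_dom C f = X" "c_cod C f = Y" "c_dom C g = X" "c_cod C g = Y"
    using assms(3,4) hom_dom hom_cod by auto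
  obtain g1 h1 where 1: "g1 \<in> hom C X Z" "h1 \<in> hom C Z Y" "f = c_comp C h1 g1"
    using zero_arr_factor[OF assms(1) Z] unfolding d by blast
  obtain g2 h2 where 2: "g2 \<in> hom C X Z" "h2 \<in> hom C Z Y" "g = c_comp C h2 g2"
    using zero_arr_factor[OF assms(2) Z] unfolding d by blast
  have "g1 = g2" using zero_obj_uniq_out[OF Z 1(1) 2(1)] .
  moreover have "h1 = h2" using zero_obj_uniq_in[OF Z 1(2) 2(2)] .
  ultimately show ?thesis using 1 2 by simp
qed

lemma zero_comp_l:
  assumes "zero_arr C f" "f \<in> hom C X Y" "g \<in> hom C Y W"
  shows "zero_arr C (c_comp C g f)"
proof -
  obtain Z where Z: "zero_obj C Z" using assms(1) unfolding zero_arr_def by blast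
  have d: "c_dom C f = X" "c_cod C f = Y" using assms(2) hom_dom hom_cod by auto
  obtain g1 h1 where 1: "g1 \<in> hom C X Z" "h1 \<in> hom C Z Y" "f = c_comp C h1 g1"
    using zero_arr_factor[OF assms(1) Z] unfolding d by blast
  have "c_comp C g f = c_comp C (c_comp C g h1) g1" using 1 assoc[OF 1(1) 1(2) assms(3)] by simp
  then show ?thesis using zero_arr_intro[OF Z 1(1) comp_hom[OF 1(2) assms(3)]] by simp
qed

lemma zero_comp_r:
  assumes "zero_arr C f" "f \<in> hom C X Y" "g \<in> hom C V X"
  shows "zero_arr C (c_comp C f g)"
proof -
  obtain Z where Z: "zero_obj C Z" using assms(1) unfolding zero_arr_def by blast
  have d: "c_dom C f = X" "c_cod C f = Y" using assms(2) hom_dom hom_cod by auto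
  obtain g1 h1 where 1: "g1 \<in> hom C X Z" "h1 \<in> hom C Z Y" "f = c_comp C h1 g1"
    using zero_arr_factor[OF assms(1) Z] unfolding d by blast
  have "c_comp C f g = c_comp C h1 (c_comp C g1 g)" using 1 assoc[OF assms(3) 1(1) 1(2)] by simp
  then show ?thesis using zero_arr_intro[OF Z comp_hom[OF assms(3) 1(1)] 1(2)] by simp
qed

lemma kernel_mono:
  assumes k: "is_kernel C f k" and a: "a \<in> hom C W (c_dom C k)" and b: "b \<in> hom C W (c_dom C k)"
    and e: "c_comp C k a = c_comp C k b"
  shows "a = b"
proof -
  have kh: "k \<in> hom C (c_dom C k) (c_cod C k)" using k arr_hom unfolding is_kernel_def by blast
  have fh: "f \<in> hom C (c_cod C k) (c_cod C f)" using k arr_hom unfolding is_kernel_def by simp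
  have fk: "zero_arr C (c_comp C f k)" using k unfolding is_kernel_def by blast
  have fkh: "c_comp C f k \<in> hom C (c_dom C k) (c_cod C f)" using comp_hom[OF kh fh] .
  let ?g = "c_comp C k a"
  have gh: "?g \<in> hom C W (c_cod C k)" using comp_hom[OF a kh] .
  have "zero_arr C (c_comp C f ?g)"
    using zero_comp_r[OF fk fkh a] assoc[OF a kh fh] by simp
  moreover have "?g \<in> c_arr C" "c_cod C ?g = c_dom C f" using gh hom_arr hom_cod k
    unfolding is_kernel_def by auto
  moreover have "\<forall>g. g \<in> c_arr C \<longrightarrow> c_cod C g = c_dom C f \<longrightarrow> zero_arr C (c_comp C f g) \<longrightarrow>
        (\<exists>!h. h \<in> hom C (c_dom C g) (c_dom C k) \<and> c_comp C k h = g)"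
    using k unfolding is_kernel_def by (elim conjE)
  ultimately have "\<exists>!h. h \<in> hom C (c_dom C ?g) (c_dom C k) \<and> c_comp C k h = ?g"
    by simp
  moreover have "c_dom C ?g = W" using gh hom_dom by auto
  ultimately show ?thesis using a b e by auto
qed

lemma bp_homs:
  assumes "biproduct C X1 X2 P s1 r1 s2 r2"
  shows "s1 \<in> hom C X1 P" "r1 \<in> hom C P X1" "s2 \<in> hom C X2 P" "r2 \<in> hom C P X2"
    "c_comp C r1 s1 = c_id C X1" "c_comp C r2 s2 = c_id C X2"
    "zero_arr C (c_comp C r2 s1)" "zero_arr C (c_comp C r1 s2)"
  using assms unfolding biproduct_def by auto

lemma bp_univ:
  assumes "biproduct C X1 X2 P s1 r1 s2 r2" "f1 \<in> hom C W X1" "f2 \<in> hom C W X2"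
  shows "\<exists>!h. h \<in> hom C W P \<and> c_comp C r1 h = f1 \<and> c_comp C r2 h = f2"
proof -
  have "\<forall>W f1 f2. f1 \<in> hom C W X1 \<longrightarrow> f2 \<in> hom C W X2 \<longrightarrow>
        (\<exists>!h. h \<in> hom C W P \<and> c_comp C r1 h = f1 \<and> c_comp C r2 h = f2)"
    using assms(1) unfolding biproduct_def by (elim conjE)
  then show ?thesis using assms(2,3) by simp
qed

lemma bp_counivp:
  assumes "biproduct C X1 X2 P s1 r1 s2 r2" "g1 \<in> hom C X1 W" "g2 \<in> hom C X2 W"
  shows "\<exists>!h. h \<in> hom C P W \<and> c_comp C h s1 = g1 \<and> c_comp C h s2 = g2"
proof -
  have "\<forall>W g1 g2. g1 \<in> hom C X1 W \<longrightarrow> g2 \<in> hom C X2 W \<longrightarrow>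
        (\<exists>!h. h \<in> hom C P W \<and> c_comp C h s1 = g1 \<and> c_comp C h s2 = g2)"
    using assms(1) unfolding biproduct_def by (elim conjE)
  then show ?thesis using assms(2,3) by simp
qed

lemma bp_pair:
  assumes "biproduct C X1 X2 P s1 r1 s2 r2" "f1 \<in> hom C W X1" "f2 \<in> hom C W X2"
  shows "\<exists>h. h \<in> hom C W P \<and> c_comp C r1 h = f1 \<and> c_comp C r2 h = f2"
  using bp_univ[OF assms] by (rule ex1_implies_ex)

lemma bp_the_pair:
  assumes "biproduct C X1 X2 P s1 r1 s2 r2" "f1 \<in> hom C W X1" "f2 \<in> hom C W X2"
  shows "(THE h. h \<in> hom C W P \<and> c_comp C r1 h = f1 \<and> c_comp C r2 h = f2) \<in> hom C W P \<and>
     c_comp C r1 (THE h. h \<in> hom C W P \<and> c_comp C r1 h = f1 \<and> c_comp C r2 h = f2) = f1 \<and>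
     c_comp C r2 (THE h. h \<in> hom C W P \<and> c_comp C r1 h = f1 \<and> c_comp C r2 h = f2) = f2"
  using bp_univ[OF assms] by (rule theI')

lemma bp_jmono:
  assumes bp: "biproduct C X1 X2 P s1 r1 s2 r2" and h: "h \<in> hom C W P" and h': "h' \<in> hom C W P"
    and e1: "c_comp C r1 h = c_comp C r1 h'" and e2: "c_comp C r2 h = c_comp C r2 h'"
  shows "h = h'"
proof -
  have "c_comp C r1 h \<in> hom C W X1" "c_comp C r2 h \<in> hom C W X2"
    using comp_hom[OF h] bp_homs[OF bp] by auto
  from bp_univ[OF bp this] have "\<exists>!x. x \<in> hom C W P \<and> c_comp C r1 x = c_comp C r1 h \<and> c_comp C r2 x = c_comp C r2 h" .
  then show ?thesis using h h' e1 e2 by (metis (no_types, lifting))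
qed

lemma bp_copair:
  assumes "biproduct C X1 X2 P s1 r1 s2 r2" "g1 \<in> hom C X1 W" "g2 \<in> hom C X2 W"
  shows "\<exists>h. h \<in> hom C P W \<and> c_comp C h s1 = g1 \<and> c_comp C h s2 = g2"
  using bp_counivp[OF assms] by (rule ex1_implies_ex)

lemma bp_jepi:
  assumes bp: "biproduct C X1 X2 P s1 r1 s2 r2" and h: "h \<in> hom C P W" and h': "h' \<in> hom C P W"
    and e1: "c_comp C h s1 = c_comp C h' s1" and e2: "c_comp C h s2 = c_comp C h' s2"
  shows "h = h'"
proof -
  have "c_comp C h s1 \<in> hom C X1 W" "c_comp C h s2 \<in> hom C X2 W"
    using comp_hom[OF _ h] bp_homs[OF bp] by auto
  from bp_counivp[OF bp this] have "\<exists>!x. x \<in> hom C P W \<and> c_comp C x s1 = c_comp C h s1 \<and> c_comp C x s2 = c_comp C h s2" .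
  then show ?thesis using h h' e1 e2 by (metis (no_types, lifting))
qed

lemma bp_iso:
  assumes P: "biproduct C X1 X2 P s1 r1 s2 r2" and Q: "biproduct C X1 X2 Q t1 q1 t2 q2"
  shows "\<exists>\<phi> \<psi>. \<phi> \<in> hom C P Q \<and> \<psi> \<in> hom C Q P \<and> c_comp C \<psi> \<phi> = c_id C P \<and>
     c_comp C \<phi> \<psi> = c_id C Q \<and> c_comp C q1 \<phi> = r1 \<and> c_comp C q2 \<phi> = r2 \<and>
     c_comp C \<psi> t1 = s1 \<and> c_comp C \<psi> t2 = s2"
proof -
  note Ph = bp_homs[OF P] and Qh = bp_homs[OF Q]
  obtain \<phi> where \<phi>: "\<phi> \<in> hom C P Q" "c_comp C q1 \<phi> = r1" "c_comp C q2 \<phi> = r2"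
    using bp_pair[OF Q Ph(2) Ph(4)] by blast
  obtain \<psi> where \<psi>: "\<psi> \<in> hom C Q P" "c_comp C \<psi> t1 = s1" "c_comp C \<psi> t2 = s2"
    using bp_copair[OF Q Ph(1) Ph(3)] by blast
  have s1: "c_comp C \<phi> s1 = t1"
  proof (rule bp_jmono[OF Q comp_hom[OF Ph(1) \<phi>(1)] Qh(1)])
    show "c_comp C q1 (c_comp C \<phi> s1) = c_comp C q1 t1"
      using assoc[OF Ph(1) \<phi>(1) Qh(2)] \<phi> Ph Qh by simp
    have "c_comp C q2 (c_comp C \<phi> s1) = c_comp C r2 s1"
      using assoc[OF Ph(1) \<phi>(1) Qh(4)] \<phi> by simp
    then show "c_comp C q2 (c_comp C \<phi> s1) = c_comp C q2 t1"
      using zero_unique[OF Ph(7) Qh(7) comp_hom[OF Ph(1) Ph(4)] comp_hom[OF Qh(1) Qh(4)]] by simp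
  qed
  have s2: "c_comp C \<phi> s2 = t2"
  proof (rule bp_jmono[OF Q comp_hom[OF Ph(3) \<phi>(1)] Qh(3)])
    show "c_comp C q2 (c_comp C \<phi> s2) = c_comp C q2 t2"
      using assoc[OF Ph(3) \<phi>(1) Qh(4)] \<phi> Ph Qh by simp
    have "c_comp C q1 (c_comp C \<phi> s2) = c_comp C r1 s2"
      using assoc[OF Ph(3) \<phi>(1) Qh(2)] \<phi> by simp
    then show "c_comp C q1 (c_comp C \<phi> s2) = c_comp C q1 t2"
      using zero_unique[OF Ph(8) Qh(8) comp_hom[OF Ph(3) Ph(2)] comp_hom[OF Qh(3) Qh(2)]] by simp
  qed
  have PP: "P \<in> c_obj C" "Q \<in> c_obj C" using hom_objs[OF Ph(1)] hom_objs[OF Qh(1)] by auto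
  have 1: "c_comp C \<psi> \<phi> = c_id C P"
  proof (rule bp_jepi[OF P comp_hom[OF \<phi>(1) \<psi>(1)] id_hom[OF PP(1)]])
    have "c_comp C (c_comp C \<psi> \<phi>) s1 = c_comp C \<psi> (c_comp C \<phi> s1)"
      using assoc[OF Ph(1) \<phi>(1) \<psi>(1)] by simp
    also have "\<dots> = s1" using s1 \<psi> by simp
    finally show "c_comp C (c_comp C \<psi> \<phi>) s1 = c_comp C (c_id C P) s1"
      using id_l[OF Ph(1)] by simp
    have "c_comp C (c_comp C \<psi> \<phi>) s2 = c_comp C \<psi> (c_comp C \<phi> s2)"
      using assoc[OF Ph(3) \<phi>(1) \<psi>(1)] by simp
    also have "\<dots> = s2" using s2 \<psi> by simp
    finally show "c_comp C (c_comp C \<psi> \<phi>) s2 = c_comp C (c_id C P) s2"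
      using id_l[OF Ph(3)] by simp
  qed
  have 2: "c_comp C \<phi> \<psi> = c_id C Q"
  proof (rule bp_jepi[OF Q comp_hom[OF \<psi>(1) \<phi>(1)] id_hom[OF PP(2)]])
    have "c_comp C (c_comp C \<phi> \<psi>) t1 = c_comp C \<phi> (c_comp C \<psi> t1)"
      using assoc[OF Qh(1) \<psi>(1) \<phi>(1)] by simp
    also have "\<dots> = t1" using s1 \<psi> by simp
    finally show "c_comp C (c_comp C \<phi> \<psi>) t1 = c_comp C (c_id C Q) t1"
      using id_l[OF Qh(1)] by simp
    have "c_comp C (c_comp C \<phi> \<psi>) t2 = c_comp C \<phi> (c_comp C \<psi> t2)"
      using assoc[OF Qh(3) \<psi>(1) \<phi>(1)] by simp
    also have "\<dots> = t2" using s2 \<psi> by simp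
    finally show "c_comp C (c_comp C \<phi> \<psi>) t2 = c_comp C (c_id C Q) t2"
      using id_l[OF Qh(3)] by simp
  qed
  show ?thesis using \<phi> \<psi> 1 2 by blast
qed

lemma bp_transfer:
  assumes Q: "biproduct C X1 X2 Q t1 q1 t2 q2"
    and \<phi>: "\<phi> \<in> hom C P Q" and \<psi>: "\<psi> \<in> hom C Q P"
    and pp: "c_comp C \<psi> \<phi> = c_id C P" and qq: "c_comp C \<phi> \<psi> = c_id C Q"
    and r1: "c_comp C q1 \<phi> = r1" and r2: "c_comp C q2 \<phi> = r2"
    and s1: "c_comp C \<psi> t1 = s1" and s2: "c_comp C \<psi> t2 = s2"
  shows "biproduct C X1 X2 P s1 r1 s2 r2"
proof -
  note Qh = bp_homs[OF Q]
  have hs: "s1 \<in> hom C X1 P" "r1 \<in> hom C P X1" "s2 \<in> hom C X2 P" "r2 \<in> hom C P X2"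
    using comp_hom[OF Qh(1) \<psi>] comp_hom[OF \<phi> Qh(2)] comp_hom[OF Qh(3) \<psi>] comp_hom[OF \<phi> Qh(4)]
     r1 r2 s1 s2 by simp_all
  have rs: "c_comp C (c_comp C qi \<phi>) (c_comp C \<psi> tj) = c_comp C qi tj"
    if "qi \<in> hom C Q Xi" "tj \<in> hom C Xj Q" for qi tj Xi Xj
  proof -
    have "c_comp C (c_comp C qi \<phi>) (c_comp C \<psi> tj) = c_comp C qi (c_comp C \<phi> (c_comp C \<psi> tj))"
      using assoc[OF comp_hom[OF that(2) \<psi>] \<phi> that(1)] by simp
    also have "\<dots> = c_comp C qi (c_comp C (c_comp C \<phi> \<psi>) tj)"
      using assoc[OF that(2) \<psi> \<phi>] by simp
    finally show ?thesis using qq id_l[OF that(2)] by simp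
  qed
  have e: "c_comp C r1 s1 = c_id C X1" "c_comp C r2 s2 = c_id C X2"
     "zero_arr C (c_comp C r2 s1)" "zero_arr C (c_comp C r1 s2)"
    using rs[OF Qh(2) Qh(1)] rs[OF Qh(4) Qh(3)] rs[OF Qh(4) Qh(1)] rs[OF Qh(2) Qh(3)] Qh r1 r2 s1 s2
    by auto
  have prod: "\<exists>!h. h \<in> hom C W P \<and> c_comp C r1 h = f1 \<and> c_comp C r2 h = f2"
    if f: "f1 \<in> hom C W X1" "f2 \<in> hom C W X2" for W f1 f2
  proof -
    obtain k where k: "k \<in> hom C W Q" "c_comp C q1 k = f1" "c_comp C q2 k = f2"
      using bp_pair[OF Q f] by blast
    have kk: "c_comp C \<psi> k \<in> hom C W P" using comp_hom[OF k(1) \<psi>] .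
    have ex: "c_comp C (c_comp C qi \<phi>) (c_comp C \<psi> k) = c_comp C qi k" if "qi \<in> hom C Q Xi" for qi Xi
    proof -
      have "c_comp C (c_comp C qi \<phi>) (c_comp C \<psi> k) = c_comp C qi (c_comp C \<phi> (c_comp C \<psi> k))"
        using assoc[OF kk \<phi> that] by simp
      also have "\<dots> = c_comp C qi (c_comp C (c_comp C \<phi> \<psi>) k)"
        using assoc[OF k(1) \<psi> \<phi>] by simp
      finally show ?thesis using qq id_l[OF k(1)] by simp
    qed
    have un: "h = h'" if h: "h \<in> hom C W P" "h' \<in> hom C W P" "c_comp C r1 h = c_comp C r1 h'"
      "c_comp C r2 h = c_comp C r2 h'" for h h'
    proof -
      have a1: "c_comp C q1 (c_comp C \<phi> x) = c_comp C r1 x" if "x \<in> hom C W P" for x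
        using assoc[OF that \<phi> Qh(2)] r1 by simp
      have a2: "c_comp C q2 (c_comp C \<phi> x) = c_comp C r2 x" if "x \<in> hom C W P" for x
        using assoc[OF that \<phi> Qh(4)] r2 by simp
      have "c_comp C \<phi> h = c_comp C \<phi> h'"
        apply (rule bp_jmono[OF Q comp_hom[OF h(1) \<phi>] comp_hom[OF h(2) \<phi>]])
        unfolding a1[OF h(1)] a1[OF h(2)] a2[OF h(1)] a2[OF h(2)] using h(3,4) by auto
      then have "c_comp C \<psi> (c_comp C \<phi> h) = c_comp C \<psi> (c_comp C \<phi> h')" by simp
      then have "c_comp C (c_comp C \<psi> \<phi>) h = c_comp C (c_comp C \<psi> \<phi>) h'"
        unfolding assoc[OF h(1) \<phi> \<psi>] assoc[OF h(2) \<phi> \<psi>] .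
      then show ?thesis unfolding pp id_l[OF h(1)] id_l[OF h(2)] .
    qed
    have e1: "c_comp C r1 (c_comp C \<psi> k) = f1" using ex[OF Qh(2)] k(2) r1 by simp
    have e2: "c_comp C r2 (c_comp C \<psi> k) = f2" using ex[OF Qh(4)] k(3) r2 by simp
    show ?thesis
    proof (rule ex1I[of _ "c_comp C \<psi> k"])
      show "c_comp C \<psi> k \<in> hom C W P \<and> c_comp C r1 (c_comp C \<psi> k) = f1 \<and> c_comp C r2 (c_comp C \<psi> k) = f2"
        using kk e1 e2 by simp
      fix h assume "h \<in> hom C W P \<and> c_comp C r1 h = f1 \<and> c_comp C r2 h = f2"
      then show "h = c_comp C \<psi> k" using un[of h "c_comp C \<psi> k"] kk e1 e2 by simp
    qed
  qed
  have coprod: "\<exists>!h. h \<in> hom C P W \<and> c_comp C h s1 = g1 \<and> c_comp C h s2 = g2"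
    if g: "g1 \<in> hom C X1 W" "g2 \<in> hom C X2 W" for W g1 g2
  proof -
    obtain k where k: "k \<in> hom C Q W" "c_comp C k t1 = g1" "c_comp C k t2 = g2"
      using bp_copair[OF Q g] by blast
    have kk: "c_comp C k \<phi> \<in> hom C P W" using comp_hom[OF \<phi> k(1)] .
    have ex: "c_comp C (c_comp C k \<phi>) (c_comp C \<psi> ti) = c_comp C k ti" if "ti \<in> hom C Xi Q" for ti Xi
    proof -
      have "c_comp C (c_comp C k \<phi>) (c_comp C \<psi> ti) = c_comp C k (c_comp C \<phi> (c_comp C \<psi> ti))"
        using assoc[OF comp_hom[OF that \<psi>] \<phi> k(1)] by simp
      also have "\<dots> = c_comp C k (c_comp C (c_comp C \<phi> \<psi>) ti)"
        using assoc[OF that \<psi> \<phi>] by simp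
      finally show ?thesis using qq id_l[OF that] by simp
    qed
    have un: "h = h'" if h: "h \<in> hom C P W" "h' \<in> hom C P W" "c_comp C h s1 = c_comp C h' s1"
      "c_comp C h s2 = c_comp C h' s2" for h h'
    proof -
      have a1: "c_comp C (c_comp C x \<psi>) t1 = c_comp C x s1" if "x \<in> hom C P W" for x
        using assoc[OF Qh(1) \<psi> that] s1 by simp
      have a2: "c_comp C (c_comp C x \<psi>) t2 = c_comp C x s2" if "x \<in> hom C P W" for x
        using assoc[OF Qh(3) \<psi> that] s2 by simp
      have "c_comp C h \<psi> = c_comp C h' \<psi>"
        apply (rule bp_jepi[OF Q comp_hom[OF \<psi> h(1)] comp_hom[OF \<psi> h(2)]])
        unfolding a1[OF h(1)] a1[OF h(2)] a2[OF h(1)] a2[OF h(2)] using h(3,4) by auto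
      then have "c_comp C (c_comp C h \<psi>) \<phi> = c_comp C (c_comp C h' \<psi>) \<phi>" by simp
      then have "c_comp C h (c_comp C \<psi> \<phi>) = c_comp C h' (c_comp C \<psi> \<phi>)"
        unfolding assoc[OF \<phi> \<psi> h(1)] assoc[OF \<phi> \<psi> h(2)] .
      then show ?thesis unfolding pp id_r[OF h(1)] id_r[OF h(2)] .
    qed
    have e1: "c_comp C (c_comp C k \<phi>) s1 = g1" using ex[OF Qh(1)] k(2) s1 by simp
    have e2: "c_comp C (c_comp C k \<phi>) s2 = g2" using ex[OF Qh(3)] k(3) s2 by simp
    show ?thesis
    proof (rule ex1I[of _ "c_comp C k \<phi>"])
      show "c_comp C k \<phi> \<in> hom C P W \<and> c_comp C (c_comp C k \<phi>) s1 = g1 \<and> c_comp C (c_comp C k \<phi>) s2 = g2"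
        using kk e1 e2 by simp
      fix h assume "h \<in> hom C P W \<and> c_comp C h s1 = g1 \<and> c_comp C h s2 = g2"
      then show "h = c_comp C k \<phi>" using un[of h "c_comp C k \<phi>"] kk e1 e2 by simp
    qed
  qed
  show ?thesis unfolding biproduct_def using hs e prod coprod by (intro conjI allI impI) simp_all
qed

end

locale starl =
  fixes C :: "('o, 'a, 'm) star_cat_scheme"
  assumes star: "star_category C"
begin

sublocale catl C using star unfolding star_category_def by unfold_locales simp

lemma star_hom: "f \<in> hom C X Y \<Longrightarrow> c_star C f \<in> hom C Y X"
  using star unfolding star_category_def hom_def by auto
lemma star_star: "f \<in> hom C X Y \<Longrightarrow> c_star C (c_star C f) = f"
  using star unfolding star_category_def hom_def by auto
lemma star_comp: "f \<in> hom C X Y \<Longrightarrow> g \<in> hom C Y Z \<Longrightarrow>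
    c_star C (c_comp C g f) = c_comp C (c_star C f) (c_star C g)"
  using star unfolding star_category_def hom_def by auto
lemma star_id: "X \<in> c_obj C \<Longrightarrow> c_star C (c_id C X) = c_id C X"
  using star unfolding star_category_def by auto

lemma zero_star:
  assumes "zero_arr C f" shows "zero_arr C (c_star C f)"
proof -
  obtain Z g h where Z: "zero_obj C Z" and g: "g \<in> hom C (c_dom C f) Z"
    and h: "h \<in> hom C Z (c_cod C f)" and f: "f = c_comp C h g"
    using assms unfolding zero_arr_def by blast
  have "c_star C f = c_comp C (c_star C g) (c_star C h)" using f star_comp[OF g h] by simp
  then show ?thesis using zero_arr_intro[OF Z star_hom[OF h] star_hom[OF g]] by simp
qed

lemma isometry_mono:
  assumes k: "isometry C k" and a: "a \<in> hom C W (c_dom C k)" and b: "b \<in> hom C W (c_dom C k)"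
    and e: "c_comp C k a = c_comp C k b"
  shows "a = b"
proof -
  have kh: "k \<in> hom C (c_dom C k) (c_cod C k)" using k arr_hom unfolding isometry_def by blast
  have kk: "c_comp C (c_star C k) k = c_id C (c_dom C k)" using k unfolding isometry_def by blast
  have "c_comp C (c_star C k) (c_comp C k a) = c_comp C (c_star C k) (c_comp C k b)" using e by simp
  then have "c_comp C (c_comp C (c_star C k) k) a = c_comp C (c_comp C (c_star C k) k) b"
    unfolding assoc[OF a kh star_hom[OF kh]] assoc[OF b kh star_hom[OF kh]] .
  then show ?thesis unfolding kk id_l[OF a] id_l[OF b] .
qed

lemma orth_from_prod:
  assumes s1: "s1 \<in> hom C X1 P" and s2: "s2 \<in> hom C X2 P"
    and r1: "r1 = c_star C s1" and r2: "r2 = c_star C s2"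
    and e1: "c_comp C r1 s1 = c_id C X1" and e2: "c_comp C r2 s2 = c_id C X2"
    and z1: "zero_arr C (c_comp C r2 s1)" and z2: "zero_arr C (c_comp C r1 s2)"
    and prod: "\<And>W f1 f2. f1 \<in> hom C W X1 \<Longrightarrow> f2 \<in> hom C W X2 \<Longrightarrow>
        (\<exists>!h. h \<in> hom C W P \<and> c_comp C r1 h = f1 \<and> c_comp C r2 h = f2)"
  shows "orthonormal_biproduct C X1 X2 P s1 r1 s2 r2"
proof -
  have r1h: "r1 \<in> hom C P X1" and r2h: "r2 \<in> hom C P X2" using r1 r2 star_hom s1 s2 by auto
  have ss1: "c_star C r1 = s1" and ss2: "c_star C r2 = s2" using r1 r2 star_star s1 s2 by auto
  have coprod: "\<exists>!h. h \<in> hom C P W \<and> c_comp C h s1 = g1 \<and> c_comp C h s2 = g2"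
    if g1: "g1 \<in> hom C X1 W" and g2: "g2 \<in> hom C X2 W" for W g1 g2
  proof -
    obtain h where h: "h \<in> hom C W P" "c_comp C r1 h = c_star C g1" "c_comp C r2 h = c_star C g2"
      using prod[OF star_hom[OF g1] star_hom[OF g2]] by blast
    have hu: "\<And>h'. h' \<in> hom C W P \<Longrightarrow> c_comp C r1 h' = c_star C g1 \<Longrightarrow> c_comp C r2 h' = c_star C g2 \<Longrightarrow> h' = h"
      using prod[OF star_hom[OF g1] star_hom[OF g2]] h by blast
    have a1: "c_comp C (c_star C h) s1 = g1"
    proof -
      have "c_star C (c_comp C r1 h) = c_comp C (c_star C h) s1" using star_comp[OF h(1) r1h] ss1 by simp
      then show ?thesis using h(2) star_star[OF g1] by simp
    qed
    have a2: "c_comp C (c_star C h) s2 = g2"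
    proof -
      have "c_star C (c_comp C r2 h) = c_comp C (c_star C h) s2" using star_comp[OF h(1) r2h] ss2 by simp
      then show ?thesis using h(3) star_star[OF g2] by simp
    qed
    show ?thesis
    proof (rule ex1I[of _ "c_star C h"])
      show "c_star C h \<in> hom C P W \<and> c_comp C (c_star C h) s1 = g1 \<and> c_comp C (c_star C h) s2 = g2"
        using star_hom[OF h(1)] a1 a2 by simp
      fix x assume x: "x \<in> hom C P W \<and> c_comp C x s1 = g1 \<and> c_comp C x s2 = g2"
      have b1: "c_comp C r1 (c_star C x) = c_star C g1"
        using star_comp[OF s1, of x W] x r1 by simp
      have b2: "c_comp C r2 (c_star C x) = c_star C g2"
        using star_comp[OF s2, of x W] x r2 by simp
      have "c_star C x = h" using hu[OF star_hom b1 b2] x by simp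
      then show "x = c_star C h" using star_star x by auto
    qed
  qed
  show ?thesis unfolding orthonormal_biproduct_def biproduct_def
    using s1 s2 r1h r2h e1 e2 z1 z2 prod coprod r1 r2 by (intro conjI allI impI) simp_all
qed

lemma bp_star_map:
  assumes P: "orthonormal_biproduct C X1 X2 P s1 r1 s2 r2"
    and Q: "orthonormal_biproduct C Y1 Y2 Q t1 q1 t2 q2"
    and h: "h \<in> hom C P Q" and a: "a \<in> hom C X1 Y1" and b: "b \<in> hom C X2 Y2"
    and ha: "c_comp C q1 h = c_comp C a r1" and hb: "c_comp C q2 h = c_comp C b r2"
  shows "c_comp C r1 (c_star C h) = c_comp C (c_star C a) q1 \<and> c_comp C r2 (c_star C h) = c_comp C (c_star C b) q2"
proof -
  have Pb: "biproduct C X1 X2 P s1 r1 s2 r2" and Qb: "biproduct C Y1 Y2 Q t1 q1 t2 q2"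
    and rs: "r1 = c_star C s1" "r2 = c_star C s2" "q1 = c_star C t1" "q2 = c_star C t2"
    using P Q unfolding orthonormal_biproduct_def by auto
  note Ph = bp_homs[OF Pb] and Qh = bp_homs[OF Qb]
  have sr: "c_star C r1 = s1" "c_star C r2 = s2" "c_star C q1 = t1" "c_star C q2 = t2"
    using rs star_star Ph Qh by auto
  have hs: "c_star C h \<in> hom C Q P" using star_hom[OF h] .
  have t1: "c_comp C (c_star C h) t1 = c_comp C s1 (c_star C a)"
    using arg_cong[OF ha, of "c_star C"] star_comp[OF h Qh(2)] star_comp[OF Ph(2) a] sr by simp
  have t2: "c_comp C (c_star C h) t2 = c_comp C s2 (c_star C b)"
    using arg_cong[OF hb, of "c_star C"] star_comp[OF h Qh(4)] star_comp[OF Ph(4) b] sr by simp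
  have as: "c_star C a \<in> hom C Y1 X1" and bs: "c_star C b \<in> hom C Y2 X2" using star_hom a b by auto
  have L1: "c_comp C r1 (c_star C h) \<in> hom C Q X1" and R1: "c_comp C (c_star C a) q1 \<in> hom C Q X1"
    using comp_hom[OF hs Ph(2)] comp_hom[OF Qh(2) as] .
  have L2: "c_comp C r2 (c_star C h) \<in> hom C Q X2" and R2: "c_comp C (c_star C b) q2 \<in> hom C Q X2"
    using comp_hom[OF hs Ph(4)] comp_hom[OF Qh(4) bs] .
  have 1: "c_comp C r1 (c_star C h) = c_comp C (c_star C a) q1"
  proof (rule bp_jepi[OF Qb L1 R1])
    have "c_comp C (c_comp C r1 (c_star C h)) t1 = c_comp C r1 (c_comp C s1 (c_star C a))"
      using assoc[OF Qh(1) hs Ph(2)] t1 by simp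
    also have "\<dots> = c_star C a" using assoc[OF as Ph(1) Ph(2)] Ph(5) id_l[OF as] by simp
    also have "\<dots> = c_comp C (c_comp C (c_star C a) q1) t1"
      using assoc[OF Qh(1) Qh(2) as] Qh(5) id_r[OF as] by simp
    finally show "c_comp C (c_comp C r1 (c_star C h)) t1 = c_comp C (c_comp C (c_star C a) q1) t1" .
    have "c_comp C (c_comp C r1 (c_star C h)) t2 = c_comp C (c_comp C r1 s2) (c_star C b)"
      using assoc[OF Qh(3) hs Ph(2)] t2 assoc[OF bs Ph(3) Ph(2)] by simp
    moreover have "zero_arr C (c_comp C (c_comp C r1 s2) (c_star C b))"
      using zero_comp_r[OF Ph(8) comp_hom[OF Ph(3) Ph(2)] bs] .
    moreover have "c_comp C (c_comp C (c_star C a) q1) t2 = c_comp C (c_star C a) (c_comp C q1 t2)"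
      using assoc[OF Qh(3) Qh(2) as] by simp
    moreover have "zero_arr C (c_comp C (c_star C a) (c_comp C q1 t2))"
      using zero_comp_l[OF Qh(8) comp_hom[OF Qh(3) Qh(2)] as] .
    ultimately show "c_comp C (c_comp C r1 (c_star C h)) t2 = c_comp C (c_comp C (c_star C a) q1) t2"
      using zero_unique comp_hom[OF Qh(3) L1] comp_hom[OF Qh(3) R1] by metis
  qed
  have 2: "c_comp C r2 (c_star C h) = c_comp C (c_star C b) q2"
  proof (rule bp_jepi[OF Qb L2 R2])
    have "c_comp C (c_comp C r2 (c_star C h)) t2 = c_comp C r2 (c_comp C s2 (c_star C b))"
      using assoc[OF Qh(3) hs Ph(4)] t2 by simp
    also have "\<dots> = c_star C b" using assoc[OF bs Ph(3) Ph(4)] Ph(6) id_l[OF bs] by simp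
    also have "\<dots> = c_comp C (c_comp C (c_star C b) q2) t2"
      using assoc[OF Qh(3) Qh(4) bs] Qh(6) id_r[OF bs] by simp
    finally show "c_comp C (c_comp C r2 (c_star C h)) t2 = c_comp C (c_comp C (c_star C b) q2) t2" .
    have "c_comp C (c_comp C r2 (c_star C h)) t1 = c_comp C (c_comp C r2 s1) (c_star C a)"
      using assoc[OF Qh(1) hs Ph(4)] t1 assoc[OF as Ph(1) Ph(4)] by simp
    moreover have "zero_arr C (c_comp C (c_comp C r2 s1) (c_star C a))"
      using zero_comp_r[OF Ph(7) comp_hom[OF Ph(1) Ph(4)] as] .
    moreover have "c_comp C (c_comp C (c_star C b) q2) t1 = c_comp C (c_star C b) (c_comp C q2 t1)"
      using assoc[OF Qh(1) Qh(4) bs] by simp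
    moreover have "zero_arr C (c_comp C (c_star C b) (c_comp C q2 t1))"
      using zero_comp_l[OF Qh(7) comp_hom[OF Qh(1) Qh(4)] bs] .
    ultimately show "c_comp C (c_comp C r2 (c_star C h)) t1 = c_comp C (c_comp C (c_star C b) q2) t1"
      using zero_unique comp_hom[OF Qh(1) L2] comp_hom[OF Qh(1) R2] by metis
  qed
  show ?thesis using 1 2 by simp
qed

lemma normal_mono_kernel:
  assumes m: "normal_mono C m" and k: "is_kernel C (c_star C m) k"
  shows "is_kernel C (c_star C k) m"
proof -
  obtain f where f: "is_kernel C f m" using m unfolding normal_mono_def by blast
  have mh: "m \<in> hom C (c_dom C m) (c_cod C m)" using f arr_hom unfolding is_kernel_def by blast
  have fh: "f \<in> hom C (c_cod C m) (c_cod C f)" using f arr_hom unfolding is_kernel_def by simp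
  have msh: "c_star C m \<in> hom C (c_cod C m) (c_dom C m)" using star_hom[OF mh] .
  have kh: "k \<in> hom C (c_dom C k) (c_cod C m)"
  proof -
    have "k \<in> c_arr C" "c_cod C k = c_cod C m" using k hom_dom[OF msh] unfolding is_kernel_def by auto
    then show ?thesis using arr_hom by metis
  qed
  have ksh: "c_star C k \<in> hom C (c_cod C m) (c_dom C k)" using star_hom[OF kh] .
  have fm: "zero_arr C (c_comp C f m)" using f unfolding is_kernel_def by blast
  have mk: "zero_arr C (c_comp C (c_star C m) k)" using k unfolding is_kernel_def by blast
  have km: "zero_arr C (c_comp C (c_star C k) m)"
  proof -
    have "c_star C (c_comp C (c_star C m) k) = c_comp C (c_star C k) m"
      using star_comp[OF kh msh] star_star[OF mh] by simp
    then show ?thesis using zero_star[OF mk] by simp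
  qed
  have kuniv: "\<forall>g. g \<in> c_arr C \<longrightarrow> c_cod C g = c_dom C (c_star C m) \<longrightarrow> zero_arr C (c_comp C (c_star C m) g) \<longrightarrow>
        (\<exists>!h. h \<in> hom C (c_dom C g) (c_dom C k) \<and> c_comp C k h = g)"
    using k unfolding is_kernel_def by (elim conjE)
  have muniv: "\<forall>g. g \<in> c_arr C \<longrightarrow> c_cod C g = c_dom C f \<longrightarrow> zero_arr C (c_comp C f g) \<longrightarrow>
        (\<exists>!h. h \<in> hom C (c_dom C g) (c_dom C m) \<and> c_comp C m h = g)"
    using f unfolding is_kernel_def by (elim conjE)
  have dfm: "c_dom C f = c_cod C m" using f unfolding is_kernel_def by simp
  have fs: "c_star C f \<in> hom C (c_cod C f) (c_cod C m)" using star_hom[OF fh] .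
  have "zero_arr C (c_comp C (c_star C m) (c_star C f))"
  proof -
    have "c_star C (c_comp C f m) = c_comp C (c_star C m) (c_star C f)" using star_comp[OF mh fh] .
    then show ?thesis using zero_star[OF fm] by simp
  qed
  then have "\<exists>!v. v \<in> hom C (c_cod C f) (c_dom C k) \<and> c_comp C k v = c_star C f"
  proof -
    have "c_star C f \<in> c_arr C" "c_cod C (c_star C f) = c_dom C (c_star C m)"
      using hom_arr[OF fs] hom_cod[OF fs] hom_dom[OF msh] by auto
    with kuniv \<open>zero_arr C (c_comp C (c_star C m) (c_star C f))\<close>
    have "\<exists>!h. h \<in> hom C (c_dom C (c_star C f)) (c_dom C k) \<and> c_comp C k h = c_star C f" by blast
    then show ?thesis using hom_dom[OF fs] by simp
  qed
  then obtain v where v: "v \<in> hom C (c_cod C f) (c_dom C k)" "c_comp C k v = c_star C f" by blast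
  have fv: "f = c_comp C (c_star C v) (c_star C k)"
    using arg_cong[OF v(2), of "c_star C"] star_comp[OF v(1) kh] star_star[OF fh] by simp
  have univ: "\<exists>!h. h \<in> hom C (c_dom C g) (c_dom C m) \<and> c_comp C m h = g"
    if g: "g \<in> c_arr C" "c_cod C g = c_dom C (c_star C k)" "zero_arr C (c_comp C (c_star C k) g)" for g
  proof -
    have gh: "g \<in> hom C (c_dom C g) (c_cod C m)" using g arr_hom hom_dom[OF ksh] by metis
    have "c_comp C f g = c_comp C (c_star C v) (c_comp C (c_star C k) g)"
      using fv assoc[OF gh ksh star_hom[OF v(1)]] by simp
    moreover have "zero_arr C (c_comp C (c_star C v) (c_comp C (c_star C k) g))"
      using zero_comp_l[OF g(3) comp_hom[OF gh ksh] star_hom[OF v(1)]] .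
    ultimately have "zero_arr C (c_comp C f g)" by simp
    then show ?thesis using muniv g(1) hom_cod[OF gh] dfm by simp
  qed
  show ?thesis unfolding is_kernel_def
    using hom_arr[OF ksh] hom_arr[OF mh] hom_dom[OF ksh] km univ by simp
qed

end

locale fcat =
  fixes C :: "('o1, 'a1) star_cat" and D :: "('o2, 'a2) star_cat"
  assumes sC: "star_category C" and sD: "star_category D"
begin

sublocale Cs: starl C by (rule starl.intro[OF sC])
sublocale Ds: starl D by (rule starl.intro[OF sD])

lemma sf_obj: "star_functor C D F \<Longrightarrow> X \<in> c_obj C \<Longrightarrow> fst F X \<in> c_obj D"
  unfolding star_functor_def is_functor_def by blast
lemma sf_id: "star_functor C D F \<Longrightarrow> X \<in> c_obj C \<Longrightarrow> snd F (c_id C X) = c_id D (fst F X)"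
  unfolding star_functor_def is_functor_def by blast
lemma sf_hom: "star_functor C D F \<Longrightarrow> f \<in> hom C X Y \<Longrightarrow> snd F f \<in> hom D (fst F X) (fst F Y)"
  unfolding star_functor_def is_functor_def hom_def by auto
lemma sf_comp: "star_functor C D F \<Longrightarrow> f \<in> hom C X Y \<Longrightarrow> g \<in> hom C Y Z \<Longrightarrow>
   snd F (c_comp C g f) = c_comp D (snd F g) (snd F f)"
  unfolding star_functor_def is_functor_def hom_def by auto
lemma sf_star: "star_functor C D F \<Longrightarrow> f \<in> c_arr C \<Longrightarrow> snd F (c_star C f) = c_star D (snd F f)"
  unfolding star_functor_def by blast
lemma sf_undef_obj: "star_functor C D F \<Longrightarrow> X \<notin> c_obj C \<Longrightarrow> fst F X = undefined"
  unfolding star_functor_def is_functor_def by blast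
lemma sf_undef_arr: "star_functor C D F \<Longrightarrow> f \<notin> c_arr C \<Longrightarrow> snd F f = undefined"
  unfolding star_functor_def is_functor_def by blast

lemma sf_intro:
  assumes "\<And>X. X \<in> c_obj C \<Longrightarrow> fst F X \<in> c_obj D"
    and "\<And>X. X \<in> c_obj C \<Longrightarrow> snd F (c_id C X) = c_id D (fst F X)"
    and "\<And>f X Y. f \<in> hom C X Y \<Longrightarrow> snd F f \<in> hom D (fst F X) (fst F Y)"
    and "\<And>f g X Y Z. f \<in> hom C X Y \<Longrightarrow> g \<in> hom C Y Z \<Longrightarrow> snd F (c_comp C g f) = c_comp D (snd F g) (snd F f)"
    and "\<And>f X Y. f \<in> hom C X Y \<Longrightarrow> snd F (c_star C f) = c_star D (snd F f)"
    and "\<And>X. X \<notin> c_obj C \<Longrightarrow> fst F X = undefined"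
    and "\<And>f. f \<notin> c_arr C \<Longrightarrow> snd F f = undefined"
  shows "star_functor C D F"
  unfolding star_functor_def is_functor_def
proof (intro conjI ballI allI impI)
  fix f assume f: "f \<in> c_arr C"
  show "snd F f \<in> hom D (fst F (c_dom C f)) (fst F (c_cod C f))" using assms(3) Cs.arr_hom[OF f] .
  show "snd F (c_star C f) = c_star D (snd F f)" using assms(5) Cs.arr_hom[OF f] .
next
  fix f g assume "f \<in> c_arr C" "g \<in> c_arr C" "c_cod C f = c_dom C g"
  then show "snd F (c_comp C g f) = c_comp D (snd F g) (snd F f)"
    using assms(4) Cs.arr_hom by metis
qed (use assms in auto)

lemma nt_hom: "nat_trans C D F G \<sigma> \<Longrightarrow> X \<in> c_obj C \<Longrightarrow> \<sigma> X \<in> hom D (fst F X) (fst G X)"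
  unfolding nat_trans_def by blast
lemma nt_nat: "nat_trans C D F G \<sigma> \<Longrightarrow> f \<in> hom C X Y \<Longrightarrow>
   c_comp D (\<sigma> Y) (snd F f) = c_comp D (snd G f) (\<sigma> X)"
  unfolding nat_trans_def hom_def by auto
lemma nt_undef: "nat_trans C D F G \<sigma> \<Longrightarrow> X \<notin> c_obj C \<Longrightarrow> \<sigma> X = undefined"
  unfolding nat_trans_def by blast

lemma nt_intro:
  assumes "star_functor C D F" "star_functor C D G"
    and "\<And>X. X \<in> c_obj C \<Longrightarrow> \<sigma> X \<in> hom D (fst F X) (fst G X)"
    and "\<And>f X Y. f \<in> hom C X Y \<Longrightarrow> c_comp D (\<sigma> Y) (snd F f) = c_comp D (snd G f) (\<sigma> X)"
    and "\<And>X. X \<notin> c_obj C \<Longrightarrow> \<sigma> X = undefined"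
  shows "nat_trans C D F G \<sigma>"
  unfolding nat_trans_def
proof (intro conjI ballI allI impI)
  show "is_functor C D F" "is_functor C D G" using assms(1,2) unfolding star_functor_def by auto
  fix f assume f: "f \<in> c_arr C"
  show "c_comp D (\<sigma> (c_cod C f)) (snd F f) = c_comp D (snd G f) (\<sigma> (c_dom C f))"
    using assms(4) Cs.arr_hom[OF f] .
qed (use assms in auto)

lemma ext_obj:
  assumes "\<And>X. X \<notin> c_obj C \<Longrightarrow> \<sigma> X = undefined" "\<And>X. X \<notin> c_obj C \<Longrightarrow> \<tau> X = undefined"
    "\<And>X. X \<in> c_obj C \<Longrightarrow> \<sigma> X = \<tau> X"
  shows "\<sigma> = \<tau>"
proof
  fix X show "\<sigma> X = \<tau> X" using assms by (cases "X \<in> c_obj C") auto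
qed

abbreviation FC where "FC \<equiv> functor_star_cat C D"

lemma FC_obj: "c_obj FC = {F. star_functor C D F}" by (simp add: functor_star_cat_def)
lemma FC_arr: "c_arr FC = {(F, G, \<sigma>). star_functor C D F \<and> star_functor C D G \<and> nat_trans C D F G \<sigma>}"
  by (simp add: functor_star_cat_def)
lemma FC_dom[simp]: "c_dom FC (F, G, \<sigma>) = F" by (simp add: functor_star_cat_def)
lemma FC_cod[simp]: "c_cod FC (F, G, \<sigma>) = G" by (simp add: functor_star_cat_def)
lemma FC_id: "c_id FC F = (F, F, \<lambda>X. if X \<in> c_obj C then c_id D (fst F X) else undefined)"
  by (simp add: functor_star_cat_def)
lemma FC_comp[simp]: "c_comp FC (G', H, \<tau>) (F, G, \<sigma>) =
   (F, H, \<lambda>X. if X \<in> c_obj C then c_comp D (\<tau> X) (\<sigma> X) else undefined)"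
  by (simp add: functor_star_cat_def)
lemma FC_star[simp]: "c_star FC (F, G, \<sigma>) = (G, F, \<lambda>X. if X \<in> c_obj C then c_star D (\<sigma> X) else undefined)"
  by (simp add: functor_star_cat_def)

lemma FC_hom3: "(F', G', \<sigma>) \<in> hom FC F G \<longleftrightarrow>
   F' = F \<and> G' = G \<and> star_functor C D F \<and> star_functor C D G \<and> nat_trans C D F G \<sigma>"
  unfolding hom_def by (auto simp: FC_arr)

lemma FC_homE:
  assumes "x \<in> hom FC F G"
  obtains \<sigma> where "x = (F, G, \<sigma>)" "star_functor C D F" "star_functor C D G" "nat_trans C D F G \<sigma>"
proof -
  obtain F' G' \<sigma> where x: "x = (F', G', \<sigma>)" by (cases x) auto
  then show ?thesis using assms that unfolding FC_hom3 x by auto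
qed

lemma FC_arrE:
  assumes "x \<in> c_arr FC"
  obtains F G \<sigma> where "x = (F, G, \<sigma>)" "x \<in> hom FC F G"
proof -
  obtain F' G' \<sigma> where x: "x = (F', G', \<sigma>)" by (cases x) auto
  then show ?thesis using assms that unfolding hom_def by auto
qed

lemma FC_id_hom: assumes F: "star_functor C D F" shows "c_id FC F \<in> hom FC F F"
  unfolding FC_id FC_hom3
proof (intro conjI refl F nt_intro)
  fix X assume X: "X \<in> c_obj C"
  show "(if X \<in> c_obj C then c_id D (fst F X) else undefined) \<in> hom D (fst F X) (fst F X)"
    using X Ds.id_hom sf_obj[OF F X] by simp
next
  fix f X Y assume f: "f \<in> hom C X Y"
  have XY: "X \<in> c_obj C" "Y \<in> c_obj C" using Cs.hom_objs[OF f] by auto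
  show "c_comp D (if Y \<in> c_obj C then c_id D (fst F Y) else undefined) (snd F f) =
        c_comp D (snd F f) (if X \<in> c_obj C then c_id D (fst F X) else undefined)"
    using XY Ds.id_l[OF sf_hom[OF F f]] Ds.id_r[OF sf_hom[OF F f]] by simp
qed simp

lemma FC_comp_hom:
  assumes x: "x \<in> hom FC F G" and y: "y \<in> hom FC G H"
  shows "c_comp FC y x \<in> hom FC F H"
proof -
  obtain \<sigma> where \<sigma>: "x = (F, G, \<sigma>)" "star_functor C D F" "star_functor C D G" "nat_trans C D F G \<sigma>"
    using FC_homE[OF x] by blast
  obtain \<tau> where \<tau>: "y = (G, H, \<tau>)" "star_functor C D G" "star_functor C D H" "nat_trans C D G H \<tau>"
    using FC_homE[OF y] by blast
  show ?thesis unfolding \<sigma>(1) \<tau>(1) FC_comp FC_hom3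
  proof (intro conjI refl \<sigma> \<tau> nt_intro)
    fix X assume X: "X \<in> c_obj C"
    show "(if X \<in> c_obj C then c_comp D (\<tau> X) (\<sigma> X) else undefined) \<in> hom D (fst F X) (fst H X)"
      using X Ds.comp_hom[OF nt_hom[OF \<sigma>(4) X] nt_hom[OF \<tau>(4) X]] by simp
  next
    fix f X Y assume f: "f \<in> hom C X Y"
    have XY: "X \<in> c_obj C" "Y \<in> c_obj C" using Cs.hom_objs[OF f] by auto
    note h = nt_hom[OF \<sigma>(4) XY(1)] nt_hom[OF \<tau>(4) XY(1)] nt_hom[OF \<sigma>(4) XY(2)] nt_hom[OF \<tau>(4) XY(2)]
      sf_hom[OF \<sigma>(2) f] sf_hom[OF \<sigma>(3) f] sf_hom[OF \<tau>(3) f]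
    have "c_comp D (c_comp D (\<tau> Y) (\<sigma> Y)) (snd F f) = c_comp D (\<tau> Y) (c_comp D (\<sigma> Y) (snd F f))"
      using Ds.assoc[OF h(5) h(3) h(4)] by simp
    also have "\<dots> = c_comp D (\<tau> Y) (c_comp D (snd G f) (\<sigma> X))" using nt_nat[OF \<sigma>(4) f] by simp
    also have "\<dots> = c_comp D (c_comp D (\<tau> Y) (snd G f)) (\<sigma> X)" using Ds.assoc[OF h(1) h(6) h(4)] by simp
    also have "\<dots> = c_comp D (c_comp D (snd H f) (\<tau> X)) (\<sigma> X)" using nt_nat[OF \<tau>(4) f] by simp
    also have "\<dots> = c_comp D (snd H f) (c_comp D (\<tau> X) (\<sigma> X))" using Ds.assoc[OF h(1) h(2) h(7)] by simp
    finally show "c_comp D (if Y \<in> c_obj C then c_comp D (\<tau> Y) (\<sigma> Y) else undefined) (snd F f) =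
        c_comp D (snd H f) (if X \<in> c_obj C then c_comp D (\<tau> X) (\<sigma> X) else undefined)"
      using XY by simp
  qed simp
qed

lemma FC_id_l: assumes x: "x \<in> hom FC F G" shows "c_comp FC (c_id FC G) x = x"
proof -
  obtain \<sigma> where \<sigma>: "x = (F, G, \<sigma>)" "star_functor C D F" "star_functor C D G" "nat_trans C D F G \<sigma>"
    using FC_homE[OF x] by blast
  have "(\<lambda>X. if X \<in> c_obj C then c_comp D (if X \<in> c_obj C then c_id D (fst G X) else undefined) (\<sigma> X) else undefined) = \<sigma>"
    by (rule ext_obj) (auto simp: nt_undef[OF \<sigma>(4)] Ds.id_l[OF nt_hom[OF \<sigma>(4)]])
  then show ?thesis unfolding \<sigma>(1) FC_id FC_comp by simp
qed

lemma FC_id_r: assumes x: "x \<in> hom FC F G" shows "c_comp FC x (c_id FC F) = x"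
proof -
  obtain \<sigma> where \<sigma>: "x = (F, G, \<sigma>)" "star_functor C D F" "star_functor C D G" "nat_trans C D F G \<sigma>"
    using FC_homE[OF x] by blast
  have "(\<lambda>X. if X \<in> c_obj C then c_comp D (\<sigma> X) (if X \<in> c_obj C then c_id D (fst F X) else undefined) else undefined) = \<sigma>"
    by (rule ext_obj) (auto simp: nt_undef[OF \<sigma>(4)] Ds.id_r[OF nt_hom[OF \<sigma>(4)]])
  then show ?thesis unfolding \<sigma>(1) FC_id FC_comp by simp
qed

lemma FC_assoc:
  assumes x: "x \<in> hom FC F G" and y: "y \<in> hom FC G H" and z: "z \<in> hom FC H K"
  shows "c_comp FC z (c_comp FC y x) = c_comp FC (c_comp FC z y) x"
proof -
  obtain \<sigma> where \<sigma>: "x = (F, G, \<sigma>)" "nat_trans C D F G \<sigma>" using FC_homE[OF x] by blast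
  obtain \<tau> where \<tau>: "y = (G, H, \<tau>)" "nat_trans C D G H \<tau>" using FC_homE[OF y] by blast
  obtain \<rho> where \<rho>: "z = (H, K, \<rho>)" "nat_trans C D H K \<rho>" using FC_homE[OF z] by blast
  have "(\<lambda>X. if X \<in> c_obj C then c_comp D (\<rho> X) (if X \<in> c_obj C then c_comp D (\<tau> X) (\<sigma> X) else undefined) else undefined)
      = (\<lambda>X. if X \<in> c_obj C then c_comp D (if X \<in> c_obj C then c_comp D (\<rho> X) (\<tau> X) else undefined) (\<sigma> X) else undefined)"
    by (rule ext_obj) (auto simp: Ds.assoc[OF nt_hom[OF \<sigma>(2)] nt_hom[OF \<tau>(2)] nt_hom[OF \<rho>(2)]])
  then show ?thesis unfolding \<sigma>(1) \<tau>(1) \<rho>(1) FC_comp by simp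
qed

lemma FC_star_hom:
  assumes x: "x \<in> hom FC F G" shows "c_star FC x \<in> hom FC G F"
proof -
  obtain \<sigma> where \<sigma>: "x = (F, G, \<sigma>)" "star_functor C D F" "star_functor C D G" "nat_trans C D F G \<sigma>"
    using FC_homE[OF x] by blast
  show ?thesis unfolding \<sigma>(1) FC_star FC_hom3
  proof (intro conjI refl \<sigma> nt_intro)
    fix X assume X: "X \<in> c_obj C"
    show "(if X \<in> c_obj C then c_star D (\<sigma> X) else undefined) \<in> hom D (fst G X) (fst F X)"
      using X Ds.star_hom[OF nt_hom[OF \<sigma>(4) X]] by simp
  next
    fix f X Y assume f: "f \<in> hom C X Y"
    have XY: "X \<in> c_obj C" "Y \<in> c_obj C" using Cs.hom_objs[OF f] by auto
    have fs: "c_star C f \<in> hom C Y X" using Cs.star_hom[OF f] .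
    have "c_comp D (\<sigma> X) (snd F (c_star C f)) = c_comp D (snd G (c_star C f)) (\<sigma> Y)"
      using nt_nat[OF \<sigma>(4) fs] .
    then have e: "c_comp D (\<sigma> X) (c_star D (snd F f)) = c_comp D (c_star D (snd G f)) (\<sigma> Y)"
      using sf_star[OF \<sigma>(2) Cs.hom_arr[OF f]] sf_star[OF \<sigma>(3) Cs.hom_arr[OF f]] by simp
    note h = nt_hom[OF \<sigma>(4) XY(1)] nt_hom[OF \<sigma>(4) XY(2)] sf_hom[OF \<sigma>(2) f] sf_hom[OF \<sigma>(3) f]
    have "c_star D (c_comp D (\<sigma> X) (c_star D (snd F f))) = c_comp D (snd F f) (c_star D (\<sigma> X))"
      using Ds.star_comp[OF Ds.star_hom[OF h(3)] h(1)] Ds.star_star[OF h(3)] by simp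
    moreover have "c_star D (c_comp D (c_star D (snd G f)) (\<sigma> Y)) = c_comp D (c_star D (\<sigma> Y)) (snd G f)"
      using Ds.star_comp[OF h(2) Ds.star_hom[OF h(4)]] Ds.star_star[OF h(4)] by simp
    ultimately have "c_comp D (c_star D (\<sigma> Y)) (snd G f) = c_comp D (snd F f) (c_star D (\<sigma> X))"
      using e by simp
    then show "c_comp D (if Y \<in> c_obj C then c_star D (\<sigma> Y) else undefined) (snd G f) =
        c_comp D (snd F f) (if X \<in> c_obj C then c_star D (\<sigma> X) else undefined)"
      using XY by simp
  qed simp
qed

lemma FC_star_id: assumes F: "star_functor C D F" shows "c_star FC (c_id FC F) = c_id FC F"
proof -
  have "(\<lambda>X. if X \<in> c_obj C then c_star D (if X \<in> c_obj C then c_id D (fst F X) else undefined) else undefined)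
     = (\<lambda>X. if X \<in> c_obj C then c_id D (fst F X) else undefined)"
    by (rule ext_obj) (auto simp: Ds.star_id[OF sf_obj[OF F]])
  then show ?thesis unfolding FC_id FC_star by simp
qed

lemma FC_star_comp:
  assumes x: "x \<in> hom FC F G" and y: "y \<in> hom FC G H"
  shows "c_star FC (c_comp FC y x) = c_comp FC (c_star FC x) (c_star FC y)"
proof -
  obtain \<sigma> where \<sigma>: "x = (F, G, \<sigma>)" "nat_trans C D F G \<sigma>" using FC_homE[OF x] by blast
  obtain \<tau> where \<tau>: "y = (G, H, \<tau>)" "nat_trans C D G H \<tau>" using FC_homE[OF y] by blast
  have "(\<lambda>X. if X \<in> c_obj C then c_star D (if X \<in> c_obj C then c_comp D (\<tau> X) (\<sigma> X) else undefined) else undefined)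
     = (\<lambda>X. if X \<in> c_obj C then c_comp D (if X \<in> c_obj C then c_star D (\<sigma> X) else undefined)
            (if X \<in> c_obj C then c_star D (\<tau> X) else undefined) else undefined)"
    by (rule ext_obj) (auto simp: Ds.star_comp[OF nt_hom[OF \<sigma>(2)] nt_hom[OF \<tau>(2)]])
  then show ?thesis unfolding \<sigma>(1) \<tau>(1) FC_comp FC_star by simp
qed

lemma FC_star_star:
  assumes x: "x \<in> hom FC F G" shows "c_star FC (c_star FC x) = x"
proof -
  obtain \<sigma> where \<sigma>: "x = (F, G, \<sigma>)" "nat_trans C D F G \<sigma>" using FC_homE[OF x] by blast
  have "(\<lambda>X. if X \<in> c_obj C then c_star D (if X \<in> c_obj C then c_star D (\<sigma> X) else undefined) else undefined) = \<sigma>"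
    by (rule ext_obj) (auto simp: nt_undef[OF \<sigma>(2)] Ds.star_star[OF nt_hom[OF \<sigma>(2)]])
  then show ?thesis unfolding \<sigma>(1) FC_star by simp
qed

lemma FC_star_category: "star_category FC"
proof -
  have arrh: "f \<in> hom FC (c_dom FC f) (c_cod FC f)" if "f \<in> c_arr FC" for f
    using that unfolding hom_def by simp
  have objh: "F \<in> c_obj FC" if "f \<in> hom FC F G" for f F G using that FC_homE FC_obj by (metis mem_Collect_eq)
  have objh2: "G \<in> c_obj FC" if "f \<in> hom FC F G" for f F G using that FC_homE FC_obj by (metis mem_Collect_eq)
  show ?thesis unfolding star_category_def category_def
  proof (intro conjI ballI allI impI)
    fix f assume f: "f \<in> c_arr FC"
    note fh = arrh[OF f]
    show "c_dom FC f \<in> c_obj FC" using objh[OF fh] .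
    show "c_cod FC f \<in> c_obj FC" using objh2[OF fh] .
    show "c_comp FC (c_id FC (c_cod FC f)) f = f" using FC_id_l[OF fh] .
    show "c_comp FC f (c_id FC (c_dom FC f)) = f" using FC_id_r[OF fh] .
    show "c_star FC f \<in> hom FC (c_cod FC f) (c_dom FC f)" using FC_star_hom[OF fh] .
    show "c_star FC (c_star FC f) = f" using FC_star_star[OF fh] .
  next
    fix X assume "X \<in> c_obj FC"
    then have X: "star_functor C D X" using FC_obj by simp
    show "c_id FC X \<in> hom FC X X" using FC_id_hom[OF X] .
    show "c_star FC (c_id FC X) = c_id FC X" using FC_star_id[OF X] .
  next
    fix f g assume f: "f \<in> c_arr FC" and g: "g \<in> c_arr FC" and e: "c_cod FC f = c_dom FC g"
    have fh: "f \<in> hom FC (c_dom FC f) (c_cod FC f)" using arrh[OF f] .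
    have gh: "g \<in> hom FC (c_cod FC f) (c_cod FC g)" using arrh[OF g] e by simp
    show "c_comp FC g f \<in> hom FC (c_dom FC f) (c_cod FC g)" using FC_comp_hom[OF fh gh] .
    show "c_star FC (c_comp FC g f) = c_comp FC (c_star FC f) (c_star FC g)" using FC_star_comp[OF fh gh] .
  next
    fix f g h assume f: "f \<in> c_arr FC" and g: "g \<in> c_arr FC" and h: "h \<in> c_arr FC"
      and e1: "c_cod FC f = c_dom FC g" and e2: "c_cod FC g = c_dom FC h"
    have fh: "f \<in> hom FC (c_dom FC f) (c_cod FC f)" using arrh[OF f] .
    have gh: "g \<in> hom FC (c_cod FC f) (c_cod FC g)" using arrh[OF g] e1 by simp
    have hh: "h \<in> hom FC (c_cod FC g) (c_cod FC h)" using arrh[OF h] e2 by simp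
    show "c_comp FC h (c_comp FC g f) = c_comp FC (c_comp FC h g) f" using FC_assoc[OF fh gh hh] .
  qed
qed

sublocale FCs: starl FC by (rule starl.intro[OF FC_star_category])

end

definition cmp :: "'f \<times> 'g \<times> ('o \<Rightarrow> 'b) \<Rightarrow> 'o \<Rightarrow> 'b" where "cmp x = snd (snd x)"
lemma cmp_simp[simp]: "cmp (F, G, \<sigma>) = \<sigma>" by (simp add: cmp_def)

context fcat
begin

lemma cmp_hom: "x \<in> hom FC F G \<Longrightarrow> X \<in> c_obj C \<Longrightarrow> cmp x X \<in> hom D (fst F X) (fst G X)"
  by (erule FC_homE) (simp add: nt_hom)

lemma cmp_comp: "x \<in> hom FC F G \<Longrightarrow> y \<in> hom FC G H \<Longrightarrow> X \<in> c_obj C \<Longrightarrow>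
   cmp (c_comp FC y x) X = c_comp D (cmp y X) (cmp x X)"
  by (erule FC_homE, erule FC_homE) simp

lemma cmp_id: "X \<in> c_obj C \<Longrightarrow> cmp (c_id FC F) X = c_id D (fst F X)"
  by (simp add: FC_id)

lemma cmp_star: "x \<in> hom FC F G \<Longrightarrow> X \<in> c_obj C \<Longrightarrow> cmp (c_star FC x) X = c_star D (cmp x X)"
  by (erule FC_homE) simp

lemma FC_hom_eq:
  assumes x: "x \<in> hom FC F G" and y: "y \<in> hom FC F G" and e: "\<And>X. X \<in> c_obj C \<Longrightarrow> cmp x X = cmp y X"
  shows "x = y"
proof -
  obtain \<sigma> where \<sigma>: "x = (F, G, \<sigma>)" "nat_trans C D F G \<sigma>" using FC_homE[OF x] by blast
  obtain \<tau> where \<tau>: "y = (F, G, \<tau>)" "nat_trans C D F G \<tau>" using FC_homE[OF y] by blast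
  have "\<sigma> = \<tau>" by (rule ext_obj) (use nt_undef[OF \<sigma>(2)] nt_undef[OF \<tau>(2)] e \<sigma>(1) \<tau>(1) in auto)
  then show ?thesis using \<sigma> \<tau> by simp
qed

lemma FC_hom_sf: "x \<in> hom FC F G \<Longrightarrow> star_functor C D F \<and> star_functor C D G"
  by (erule FC_homE) simp

end

locale fcat_ph = fcat +
  assumes ph: "pre_hilbert D"
begin

definition Zd where "Zd = (SOME Z. zero_obj D Z)"

lemma Zd: "zero_obj D Zd"
proof -
  have "\<exists>Z. zero_obj D Z" using ph unfolding pre_hilbert_def by blast
  then show ?thesis unfolding Zd_def by (rule someI_ex)
qed

lemma Zd_obj: "Zd \<in> c_obj D" using Zd unfolding zero_obj_def by blast

definition Z0 where
  "Z0 = (\<lambda>X. if X \<in> c_obj C then Zd else undefined, \<lambda>f. if f \<in> c_arr C then c_id D Zd else undefined)"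

lemma Z0_sf: "star_functor C D Z0"
proof (rule sf_intro)
  fix f X Y assume f: "f \<in> hom C X Y"
  have "f \<in> c_arr C" "c_star C f \<in> c_arr C" using Cs.hom_arr[OF f] Cs.hom_arr[OF Cs.star_hom[OF f]] by auto
  then show "snd Z0 (c_star C f) = c_star D (snd Z0 f)" unfolding Z0_def using Ds.star_id[OF Zd_obj] by simp
  show "snd Z0 f \<in> hom D (fst Z0 X) (fst Z0 Y)" unfolding Z0_def
    using Cs.hom_arr[OF f] Cs.hom_objs[OF f] Ds.id_hom[OF Zd_obj] by simp
next
  fix f g X Y Z assume f: "f \<in> hom C X Y" and g: "g \<in> hom C Y Z"
  have "c_comp C g f \<in> c_arr C" using Cs.hom_arr[OF Cs.comp_hom[OF f g]] .
  then show "snd Z0 (c_comp C g f) = c_comp D (snd Z0 g) (snd Z0 f)" unfolding Z0_def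
    using Cs.hom_arr[OF f] Cs.hom_arr[OF g] Ds.id_l[OF Ds.id_hom[OF Zd_obj]] by simp
next
  fix X assume X: "X \<in> c_obj C"
  then show "fst Z0 X \<in> c_obj D" unfolding Z0_def using Zd_obj by simp
  show "snd Z0 (c_id C X) = c_id D (fst Z0 X)" unfolding Z0_def using X Cs.hom_arr[OF Cs.id_hom[OF X]] by simp
qed (auto simp: Z0_def)

lemma Z0_fst: "X \<in> c_obj C \<Longrightarrow> fst Z0 X = Zd" by (simp add: Z0_def)

definition zi where "zi Y = (THE f. f \<in> hom D Zd Y)"
definition zo where "zo Y = (THE f. f \<in> hom D Y Zd)"

lemma zi: "Y \<in> c_obj D \<Longrightarrow> zi Y \<in> hom D Zd Y"
  unfolding zi_def by (rule theI') (use Zd in \<open>auto simp: zero_obj_def\<close>)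
lemma zo: "Y \<in> c_obj D \<Longrightarrow> zo Y \<in> hom D Y Zd"
  unfolding zo_def by (rule theI') (use Zd in \<open>auto simp: zero_obj_def\<close>)

lemma Z0_zero: "zero_obj FC Z0"
  unfolding zero_obj_def
proof (intro conjI ballI)
  show "Z0 \<in> c_obj FC" using Z0_sf FC_obj by simp
  fix F assume "F \<in> c_obj FC"
  then have F: "star_functor C D F" using FC_obj by simp
  define u where "u = (\<lambda>X. if X \<in> c_obj C then zi (fst F X) else undefined)"
  have uh: "(Z0, F, u) \<in> hom FC Z0 F"
    unfolding FC_hom3
  proof (intro conjI refl Z0_sf F nt_intro)
    fix X assume X: "X \<in> c_obj C"
    show "u X \<in> hom D (fst Z0 X) (fst F X)" unfolding u_def Z0_fst[OF X] using X zi sf_obj[OF F X] by simp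
  next
    fix f X Y assume f: "f \<in> hom C X Y"
    have XY: "X \<in> c_obj C" "Y \<in> c_obj C" using Cs.hom_objs[OF f] by auto
    have zf: "snd Z0 f \<in> hom D Zd Zd" using sf_hom[OF Z0_sf f] Z0_fst XY by simp
    have a: "c_comp D (u Y) (snd Z0 f) \<in> hom D Zd (fst F Y)"
      using Ds.comp_hom[OF zf zi[OF sf_obj[OF F XY(2)]]] XY u_def by simp
    have b: "c_comp D (snd F f) (u X) \<in> hom D Zd (fst F Y)"
      using Ds.comp_hom[OF zi[OF sf_obj[OF F XY(1)]] sf_hom[OF F f]] XY u_def by simp
    show "c_comp D (u Y) (snd Z0 f) = c_comp D (snd F f) (u X)" using Ds.zero_obj_uniq_in[OF Zd a b] .
  qed (simp add: u_def)
  show "\<exists>!f. f \<in> hom FC Z0 F"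
  proof (rule ex1I[of _ "(Z0, F, u)"])
    show "(Z0, F, u) \<in> hom FC Z0 F" using uh .
    fix x assume x: "x \<in> hom FC Z0 F"
    show "x = (Z0, F, u)"
    proof (rule FC_hom_eq[OF x uh])
      fix X assume X: "X \<in> c_obj C"
      have "cmp x X \<in> hom D Zd (fst F X)" using cmp_hom[OF x X] Z0_fst[OF X] by simp
      moreover have "cmp (Z0, F, u) X \<in> hom D Zd (fst F X)" using cmp_hom[OF uh X] Z0_fst[OF X] by simp
      ultimately show "cmp x X = cmp (Z0, F, u) X" using Ds.zero_obj_uniq_in[OF Zd] by blast
    qed
  qed
  define v where "v = (\<lambda>X. if X \<in> c_obj C then zo (fst F X) else undefined)"
  have vh: "(F, Z0, v) \<in> hom FC F Z0"
    unfolding FC_hom3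
  proof (intro conjI refl Z0_sf F nt_intro)
    fix X assume X: "X \<in> c_obj C"
    show "v X \<in> hom D (fst F X) (fst Z0 X)" unfolding v_def Z0_fst[OF X] using X zo sf_obj[OF F X] by simp
  next
    fix f X Y assume f: "f \<in> hom C X Y"
    have XY: "X \<in> c_obj C" "Y \<in> c_obj C" using Cs.hom_objs[OF f] by auto
    have a: "c_comp D (v Y) (snd F f) \<in> hom D (fst F X) Zd"
      using Ds.comp_hom[OF sf_hom[OF F f] zo[OF sf_obj[OF F XY(2)]]] XY v_def by simp
    have zf: "snd Z0 f \<in> hom D Zd Zd" using sf_hom[OF Z0_sf f] Z0_fst XY by simp
    have b: "c_comp D (snd Z0 f) (v X) \<in> hom D (fst F X) Zd"
      using Ds.comp_hom[OF zo[OF sf_obj[OF F XY(1)]] zf] XY v_def by simp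
    show "c_comp D (v Y) (snd F f) = c_comp D (snd Z0 f) (v X)" using Ds.zero_obj_uniq_out[OF Zd a b] .
  qed (simp add: v_def)
  show "\<exists>!f. f \<in> hom FC F Z0"
  proof (rule ex1I[of _ "(F, Z0, v)"])
    show "(F, Z0, v) \<in> hom FC F Z0" using vh .
    fix x assume x: "x \<in> hom FC F Z0"
    show "x = (F, Z0, v)"
    proof (rule FC_hom_eq[OF x vh])
      fix X assume X: "X \<in> c_obj C"
      have "cmp x X \<in> hom D (fst F X) Zd" using cmp_hom[OF x X] Z0_fst[OF X] by simp
      moreover have "cmp (F, Z0, v) X \<in> hom D (fst F X) Zd" using cmp_hom[OF vh X] Z0_fst[OF X] by simp
      ultimately show "cmp x X = cmp (F, Z0, v) X" using Ds.zero_obj_uniq_out[OF Zd] by blast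
    qed
  qed
qed

lemma FC_zero_iff:
  assumes x: "x \<in> hom FC F G"
  shows "zero_arr FC x \<longleftrightarrow> (\<forall>X \<in> c_obj C. zero_arr D (cmp x X))"
proof
  assume z: "zero_arr FC x"
  have dc: "c_dom FC x = F" "c_cod FC x = G" using FCs.hom_dom[OF x] FCs.hom_cod[OF x] by auto
  obtain g h where g: "g \<in> hom FC F Z0" and h: "h \<in> hom FC Z0 G" and e: "x = c_comp FC h g"
    using FCs.zero_arr_factor[OF z Z0_zero] unfolding dc by blast
  show "\<forall>X \<in> c_obj C. zero_arr D (cmp x X)"
  proof
    fix X assume X: "X \<in> c_obj C"
    have "cmp x X = c_comp D (cmp h X) (cmp g X)" using e cmp_comp[OF g h X] by simp
    then show "zero_arr D (cmp x X)"
      using Ds.zero_arr_intro[OF Zd, of "cmp g X" "fst F X" "cmp h X" "fst G X"]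
        cmp_hom[OF g X] cmp_hom[OF h X] Z0_fst[OF X] by simp
  qed
next
  assume z: "\<forall>X \<in> c_obj C. zero_arr D (cmp x X)"
  have FG: "F \<in> c_obj FC" "G \<in> c_obj FC" using FC_hom_sf[OF x] FC_obj by auto
  obtain u where u: "u \<in> hom FC F Z0" using FCs.zero_obj_out[OF Z0_zero FG(1)] by blast
  obtain v where v: "v \<in> hom FC Z0 G" using FCs.zero_obj_in[OF Z0_zero FG(2)] by blast
  have w: "c_comp FC v u \<in> hom FC F G" using FCs.comp_hom[OF u v] .
  have "x = c_comp FC v u"
  proof (rule FC_hom_eq[OF x w])
    fix X assume X: "X \<in> c_obj C"
    have "zero_arr D (c_comp D (cmp v X) (cmp u X))"
      using Ds.zero_arr_intro[OF Zd, of "cmp u X" "fst F X" "cmp v X" "fst G X"]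
        cmp_hom[OF u X] cmp_hom[OF v X] Z0_fst[OF X] by simp
    then show "cmp x X = cmp (c_comp FC v u) X"
      using Ds.zero_unique[OF z[rule_format, OF X] _ cmp_hom[OF x X]] cmp_comp[OF u v X] cmp_hom[OF w X]
      by simp
  qed
  then show "zero_arr FC x" using FCs.zero_arr_intro[OF Z0_zero u v] by simp
qed

end

context fcat_ph
begin

lemma kernel_parts:
  assumes "is_kernel D f k"
  shows "f \<in> c_arr D" "k \<in> c_arr D" "c_cod D k = c_dom D f" "zero_arr D (c_comp D f k)"
    "\<And>g. g \<in> c_arr D \<Longrightarrow> c_cod D g = c_dom D f \<Longrightarrow> zero_arr D (c_comp D f g) \<Longrightarrow>
        (\<exists>!h. h \<in> hom D (c_dom D g) (c_dom D k) \<and> c_comp D k h = g)"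
  using assms unfolding is_kernel_def by blast+

lemma kernel_factor:
  assumes k: "is_kernel D f k" and f: "f \<in> hom D A B" and kh: "k \<in> hom D K A"
    and g: "g \<in> hom D W A" and z: "zero_arr D (c_comp D f g)"
  shows "\<exists>!h. h \<in> hom D W K \<and> c_comp D k h = g"
proof -
  have "c_cod D g = c_dom D f" using Ds.hom_cod[OF g] Ds.hom_dom[OF f] by simp
  from kernel_parts(5)[OF k Ds.hom_arr[OF g] this z]
  show ?thesis using Ds.hom_dom[OF g] Ds.hom_dom[OF kh] by simp
qed

lemma FC_kernel:
  assumes s: "s \<in> hom FC F G" and k: "k \<in> hom FC K F"
    and pk: "\<And>X. X \<in> c_obj C \<Longrightarrow> is_kernel D (cmp s X) (cmp k X)"
  shows "is_kernel FC s k"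
proof -
  have zk: "zero_arr FC (c_comp FC s k)"
    using FC_zero_iff[OF FCs.comp_hom[OF k s]] cmp_comp[OF k s] kernel_parts(4)[OF pk] by simp
  have univ: "\<exists>!h. h \<in> hom FC (c_dom FC g) (c_dom FC k) \<and> c_comp FC k h = g"
    if g: "g \<in> c_arr FC" "c_cod FC g = c_dom FC s" "zero_arr FC (c_comp FC s g)" for g
  proof -
    define W where "W = c_dom FC g"
    have gh: "g \<in> hom FC W F" using FCs.arr_hom[OF g(1)] g(2) FCs.hom_dom[OF s] W_def by simp
    have dk: "c_dom FC k = K" using FCs.hom_dom[OF k] .
    have sfs: "star_functor C D W" "star_functor C D K" "star_functor C D F"
      using FC_hom_sf[OF gh] FC_hom_sf[OF k] by auto
    have zp: "zero_arr D (c_comp D (cmp s X) (cmp g X))" if X: "X \<in> c_obj C" for X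
    proof -
      have "\<forall>X\<in>c_obj C. zero_arr D (cmp (c_comp FC s g) X)"
        using g(3) FC_zero_iff[OF FCs.comp_hom[OF gh s]] by simp
      then have "zero_arr D (cmp (c_comp FC s g) X)" using X by blast
      then show ?thesis using cmp_comp[OF gh s X] by simp
    qed
    have ex: "\<exists>!h. h \<in> hom D (fst W X) (fst K X) \<and> c_comp D (cmp k X) h = cmp g X" if X: "X \<in> c_obj C" for X
      using kernel_factor[OF pk[OF X] cmp_hom[OF s X] cmp_hom[OF k X] cmp_hom[OF gh X] zp[OF X]] .
    define hc where "hc = (\<lambda>X. if X \<in> c_obj C then (THE h. h \<in> hom D (fst W X) (fst K X) \<and> c_comp D (cmp k X) h = cmp g X) else undefined)"
    have hc: "hc X \<in> hom D (fst W X) (fst K X) \<and> c_comp D (cmp k X) (hc X) = cmp g X" if X: "X \<in> c_obj C" for X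
      using theI'[OF ex[OF X]] X unfolding hc_def by simp
    have mono: "a = b" if X: "X \<in> c_obj C" and a: "a \<in> hom D V (fst K X)" and b: "b \<in> hom D V (fst K X)"
      and e: "c_comp D (cmp k X) a = c_comp D (cmp k X) b" for X V a b
      using Ds.kernel_mono[OF pk[OF X], of a V b] a b e Ds.hom_dom[OF cmp_hom[OF k X]] by simp
    obtain \<kappa> where \<kappa>: "k = (K, F, \<kappa>)" "nat_trans C D K F \<kappa>" using FC_homE[OF k] by blast
    obtain \<gamma> where \<gamma>: "g = (W, F, \<gamma>)" "nat_trans C D W F \<gamma>" using FC_homE[OF gh] by blast
    have hh: "(W, K, hc) \<in> hom FC W K"
      unfolding FC_hom3
    proof (intro conjI refl sfs nt_intro)
      fix X assume X: "X \<in> c_obj C" show "hc X \<in> hom D (fst W X) (fst K X)" using hc[OF X] by simp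
    next
      fix f X Y assume f: "f \<in> hom C X Y"
      have XY: "X \<in> c_obj C" "Y \<in> c_obj C" using Cs.hom_objs[OF f] by auto
      note hX = hc[OF XY(1)] and hY = hc[OF XY(2)]
      have Wf: "snd W f \<in> hom D (fst W X) (fst W Y)" using sf_hom[OF sfs(1) f] .
      have Kf: "snd K f \<in> hom D (fst K X) (fst K Y)" using sf_hom[OF sfs(2) f] .
      have Ff: "snd F f \<in> hom D (fst F X) (fst F Y)" using sf_hom[OF sfs(3) f] .
      have kX: "\<kappa> X \<in> hom D (fst K X) (fst F X)" and kY: "\<kappa> Y \<in> hom D (fst K Y) (fst F Y)"
        using cmp_hom[OF k XY(1)] cmp_hom[OF k XY(2)] \<kappa>(1) by auto
      have "c_comp D (\<kappa> Y) (c_comp D (hc Y) (snd W f)) = c_comp D (c_comp D (\<kappa> Y) (hc Y)) (snd W f)"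
        using Ds.assoc[OF Wf conjunct1[OF hY] kY] by simp
      also have "\<dots> = c_comp D (\<gamma> Y) (snd W f)" using hY \<kappa>(1) \<gamma>(1) by simp
      also have "\<dots> = c_comp D (snd F f) (\<gamma> X)" using nt_nat[OF \<gamma>(2) f] .
      also have "\<dots> = c_comp D (snd F f) (c_comp D (\<kappa> X) (hc X))" using hX \<kappa>(1) \<gamma>(1) by simp
      also have "\<dots> = c_comp D (c_comp D (snd F f) (\<kappa> X)) (hc X)"
        using Ds.assoc[OF conjunct1[OF hX] kX Ff] by simp
      also have "\<dots> = c_comp D (c_comp D (\<kappa> Y) (snd K f)) (hc X)" using nt_nat[OF \<kappa>(2) f] by simp
      also have "\<dots> = c_comp D (\<kappa> Y) (c_comp D (snd K f) (hc X))"
        using Ds.assoc[OF conjunct1[OF hX] Kf kY] by simp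
      finally have "c_comp D (\<kappa> Y) (c_comp D (hc Y) (snd W f)) = c_comp D (\<kappa> Y) (c_comp D (snd K f) (hc X))" .
      then show "c_comp D (hc Y) (snd W f) = c_comp D (snd K f) (hc X)"
        using mono[OF XY(2) Ds.comp_hom[OF Wf conjunct1[OF hY]] Ds.comp_hom[OF conjunct1[OF hX] Kf]] \<kappa>(1)
        by simp
    qed (simp add: hc_def)
    have kh: "c_comp FC k (W, K, hc) = g"
    proof (rule FC_hom_eq[OF FCs.comp_hom[OF hh k] gh])
      fix X assume X: "X \<in> c_obj C"
      show "cmp (c_comp FC k (W, K, hc)) X = cmp g X" using cmp_comp[OF hh k X] hc[OF X] by simp
    qed
    show ?thesis unfolding dk W_def[symmetric]
    proof (rule ex1I[of _ "(W, K, hc)"])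
      show "(W, K, hc) \<in> hom FC W K \<and> c_comp FC k (W, K, hc) = g" using hh kh by simp
      fix h assume h: "h \<in> hom FC W K \<and> c_comp FC k h = g"
      show "h = (W, K, hc)"
      proof (rule FC_hom_eq[OF conjunct1[OF h] hh])
        fix X assume X: "X \<in> c_obj C"
        have "c_comp D (cmp k X) (cmp h X) = cmp g X" using cmp_comp[OF conjunct1[OF h] k X] h by simp
        then show "cmp h X = cmp (W, K, hc) X"
          using mono[OF X cmp_hom[OF conjunct1[OF h] X] conjunct1[OF hc[OF X]]] hc[OF X] by simp
      qed
    qed
  qed
  show ?thesis unfolding is_kernel_def
    using FCs.hom_arr[OF s] FCs.hom_arr[OF k] FCs.hom_cod[OF k] FCs.hom_dom[OF s] zk univ by simp
qed

end

context fcat_ph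
begin

lemma FC_has_kernel:
  assumes s: "s \<in> hom FC F G"
  shows "\<exists>K k. k \<in> hom FC K F \<and> is_kernel FC s k \<and> isometry FC k \<and>
     (\<forall>X\<in>c_obj C. is_kernel D (cmp s X) (cmp k X))"
proof -
  obtain \<sigma> where \<sigma>: "s = (F, G, \<sigma>)" "star_functor C D F" "star_functor C D G" "nat_trans C D F G \<sigma>"
    using FC_homE[OF s] by blast
  have sh: "\<sigma> X \<in> hom D (fst F X) (fst G X)" if "X \<in> c_obj C" for X using nt_hom[OF \<sigma>(4) that] .
  have "\<forall>X\<in>c_obj C. \<exists>k. is_kernel D (\<sigma> X) k \<and> isometry D k"
    using ph Ds.hom_arr[OF sh] unfolding pre_hilbert_def by blast
  then obtain kf where kf: "\<And>X. X \<in> c_obj C \<Longrightarrow> is_kernel D (\<sigma> X) (kf X) \<and> isometry D (kf X)"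
    by (metis bchoice)
  define KO where "KO X = c_dom D (kf X)" for X
  have kfh: "kf X \<in> hom D (KO X) (fst F X)" if X: "X \<in> c_obj C" for X
  proof -
    have "kf X \<in> c_arr D" "c_cod D (kf X) = c_dom D (\<sigma> X)"
      using kernel_parts[OF conjunct1[OF kf[OF X]]] by auto
    then show ?thesis using Ds.arr_hom Ds.hom_dom[OF sh[OF X]] KO_def by metis
  qed
  have kfi: "c_comp D (c_star D (kf X)) (kf X) = c_id D (KO X)" if X: "X \<in> c_obj C" for X
    using kf[OF X] unfolding isometry_def KO_def by blast
  have kmono: "a = b" if X: "X \<in> c_obj C" and a: "a \<in> hom D V (KO X)" and b: "b \<in> hom D V (KO X)"
    and e: "c_comp D (kf X) a = c_comp D (kf X) b" for X V a b
    using Ds.isometry_mono[OF conjunct2[OF kf[OF X]], of a V b] a b e KO_def by simp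
  define K where "K = (\<lambda>X. if X \<in> c_obj C then KO X else undefined,
     \<lambda>f. if f \<in> c_arr C then (THE h. h \<in> hom D (KO (c_dom C f)) (KO (c_cod C f)) \<and>
        c_comp D (kf (c_cod C f)) h = c_comp D (snd F f) (kf (c_dom C f))) else undefined)"
  have Kfst: "fst K X = KO X" if "X \<in> c_obj C" for X using that K_def by simp
  have Kf: "snd K f \<in> hom D (KO X) (KO Y) \<and> c_comp D (kf Y) (snd K f) = c_comp D (snd F f) (kf X)"
    if f: "f \<in> hom C X Y" for f X Y
  proof -
    have XY: "X \<in> c_obj C" "Y \<in> c_obj C" using Cs.hom_objs[OF f] by auto
    have Ff: "snd F f \<in> hom D (fst F X) (fst F Y)" using sf_hom[OF \<sigma>(2) f] .
    have Gf: "snd G f \<in> hom D (fst G X) (fst G Y)" using sf_hom[OF \<sigma>(3) f] .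
    have g: "c_comp D (snd F f) (kf X) \<in> hom D (KO X) (fst F Y)" using Ds.comp_hom[OF kfh[OF XY(1)] Ff] .
    have z0: "zero_arr D (c_comp D (\<sigma> X) (kf X))" using kernel_parts(4)[OF conjunct1[OF kf[OF XY(1)]]] .
    have "c_comp D (\<sigma> Y) (c_comp D (snd F f) (kf X)) = c_comp D (c_comp D (\<sigma> Y) (snd F f)) (kf X)"
      using Ds.assoc[OF kfh[OF XY(1)] Ff sh[OF XY(2)]] .
    also have "\<dots> = c_comp D (c_comp D (snd G f) (\<sigma> X)) (kf X)" using nt_nat[OF \<sigma>(4) f] by simp
    also have "\<dots> = c_comp D (snd G f) (c_comp D (\<sigma> X) (kf X))"
      using Ds.assoc[OF kfh[OF XY(1)] sh[OF XY(1)] Gf] by simp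
    finally have z: "zero_arr D (c_comp D (\<sigma> Y) (c_comp D (snd F f) (kf X)))"
      using Ds.zero_comp_l[OF z0 Ds.comp_hom[OF kfh[OF XY(1)] sh[OF XY(1)]] Gf] by simp
    have "\<exists>!h. h \<in> hom D (KO X) (KO Y) \<and> c_comp D (kf Y) h = c_comp D (snd F f) (kf X)"
      using kernel_factor[OF conjunct1[OF kf[OF XY(2)]] sh[OF XY(2)] kfh[OF XY(2)] g z] .
    from theI'[OF this] show ?thesis
      using Cs.hom_arr[OF f] Cs.hom_dom[OF f] Cs.hom_cod[OF f] K_def by simp
  qed
  have Ksf: "star_functor C D K"
  proof (rule sf_intro)
    fix X assume X: "X \<in> c_obj C"
    show "fst K X \<in> c_obj D" using Kfst[OF X] Ds.hom_objs[OF kfh[OF X]] by simp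
    have i: "c_id C X \<in> hom C X X" using Cs.id_hom[OF X] .
    have "c_comp D (kf X) (snd K (c_id C X)) = c_comp D (kf X) (c_id D (KO X))"
      using Kf[OF i] sf_id[OF \<sigma>(2) X] Ds.id_l[OF kfh[OF X]] Ds.id_r[OF kfh[OF X]] by simp
    then show "snd K (c_id C X) = c_id D (fst K X)"
      using kmono[OF X conjunct1[OF Kf[OF i]] Ds.id_hom[OF Ds.hom_objs[OF kfh[OF X], THEN conjunct1]]]
        Kfst[OF X] by simp
  next
    fix f X Y assume f: "f \<in> hom C X Y"
    have XY: "X \<in> c_obj C" "Y \<in> c_obj C" using Cs.hom_objs[OF f] by auto
    show "snd K f \<in> hom D (fst K X) (fst K Y)" using Kf[OF f] Kfst XY by simp
    have fs: "c_star C f \<in> hom C Y X" using Cs.star_hom[OF f] .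
    have Ff: "snd F f \<in> hom D (fst F X) (fst F Y)" using sf_hom[OF \<sigma>(2) f] .
    have Ffs: "snd F (c_star C f) = c_star D (snd F f)" using sf_star[OF \<sigma>(2) Cs.hom_arr[OF f]] .
    note a = Kf[OF f] and b = Kf[OF fs]
    have as: "c_star D (snd K f) \<in> hom D (KO Y) (KO X)" using Ds.star_hom[OF conjunct1[OF a]] .
    have st: "c_comp D (c_star D (snd K f)) (c_star D (kf Y)) = c_comp D (c_star D (kf X)) (snd F (c_star C f))"
      using arg_cong[OF conjunct2[OF a], of "c_star D"] Ds.star_comp[OF conjunct1[OF a] kfh[OF XY(2)]]
        Ds.star_comp[OF kfh[OF XY(1)] Ff] Ffs by simp
    have "c_star D (snd K f) = c_comp D (c_star D (snd K f)) (c_id D (KO Y))" using Ds.id_r[OF as] by simp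
    also have "\<dots> = c_comp D (c_star D (snd K f)) (c_comp D (c_star D (kf Y)) (kf Y))" using kfi[OF XY(2)] by simp
    also have "\<dots> = c_comp D (c_comp D (c_star D (snd K f)) (c_star D (kf Y))) (kf Y)"
      using Ds.assoc[OF kfh[OF XY(2)] Ds.star_hom[OF kfh[OF XY(2)]] as] .
    also have "\<dots> = c_comp D (c_comp D (c_star D (kf X)) (snd F (c_star C f))) (kf Y)" using st by simp
    also have "\<dots> = c_comp D (c_star D (kf X)) (c_comp D (snd F (c_star C f)) (kf Y))"
      using Ds.assoc[OF kfh[OF XY(2)] sf_hom[OF \<sigma>(2) fs] Ds.star_hom[OF kfh[OF XY(1)]]] by simp
    also have "\<dots> = c_comp D (c_star D (kf X)) (c_comp D (kf X) (snd K (c_star C f)))" using b by simp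
    also have "\<dots> = c_comp D (c_comp D (c_star D (kf X)) (kf X)) (snd K (c_star C f))"
      using Ds.assoc[OF conjunct1[OF b] kfh[OF XY(1)] Ds.star_hom[OF kfh[OF XY(1)]]] .
    also have "\<dots> = snd K (c_star C f)" using kfi[OF XY(1)] Ds.id_l[OF conjunct1[OF b]] by simp
    finally show "snd K (c_star C f) = c_star D (snd K f)" by simp
  next
    fix f g X Y Z assume f: "f \<in> hom C X Y" and g: "g \<in> hom C Y Z"
    have XYZ: "X \<in> c_obj C" "Y \<in> c_obj C" "Z \<in> c_obj C" using Cs.hom_objs[OF f] Cs.hom_objs[OF g] by auto
    have gf: "c_comp C g f \<in> hom C X Z" using Cs.comp_hom[OF f g] .
    note a = Kf[OF f] and b = Kf[OF g] and c = Kf[OF gf]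
    have Ff: "snd F f \<in> hom D (fst F X) (fst F Y)" using sf_hom[OF \<sigma>(2) f] .
    have Fg: "snd F g \<in> hom D (fst F Y) (fst F Z)" using sf_hom[OF \<sigma>(2) g] .
    have "c_comp D (kf Z) (c_comp D (snd K g) (snd K f)) = c_comp D (c_comp D (kf Z) (snd K g)) (snd K f)"
      using Ds.assoc[OF conjunct1[OF a] conjunct1[OF b] kfh[OF XYZ(3)]] .
    also have "\<dots> = c_comp D (c_comp D (snd F g) (kf Y)) (snd K f)" using b by simp
    also have "\<dots> = c_comp D (snd F g) (c_comp D (kf Y) (snd K f))"
      using Ds.assoc[OF conjunct1[OF a] kfh[OF XYZ(2)] Fg] by simp
    also have "\<dots> = c_comp D (snd F g) (c_comp D (snd F f) (kf X))" using a by simp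
    also have "\<dots> = c_comp D (c_comp D (snd F g) (snd F f)) (kf X)"
      using Ds.assoc[OF kfh[OF XYZ(1)] Ff Fg] .
    also have "\<dots> = c_comp D (kf Z) (snd K (c_comp C g f))" using c sf_comp[OF \<sigma>(2) f g] by simp
    finally show "snd K (c_comp C g f) = c_comp D (snd K g) (snd K f)"
      using kmono[OF XYZ(3) Ds.comp_hom[OF conjunct1[OF a] conjunct1[OF b]] conjunct1[OF c]] by simp
  qed (auto simp: K_def)
  define kc where "kc = (\<lambda>X. if X \<in> c_obj C then kf X else undefined)"
  have kh: "(K, F, kc) \<in> hom FC K F"
    unfolding FC_hom3
  proof (intro conjI refl Ksf \<sigma>(2) nt_intro)
    fix X assume X: "X \<in> c_obj C"
    show "kc X \<in> hom D (fst K X) (fst F X)" using kfh[OF X] Kfst[OF X] X kc_def by simp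
  next
    fix f X Y assume f: "f \<in> hom C X Y"
    have XY: "X \<in> c_obj C" "Y \<in> c_obj C" using Cs.hom_objs[OF f] by auto
    show "c_comp D (kc Y) (snd K f) = c_comp D (snd F f) (kc X)" using Kf[OF f] XY kc_def by simp
  qed (simp add: kc_def)
  have pk: "is_kernel D (cmp s X) (cmp (K, F, kc) X)" if X: "X \<in> c_obj C" for X
    using kf[OF X] X \<sigma>(1) kc_def by simp
  have isk: "is_kernel FC s (K, F, kc)" using FC_kernel[OF s kh pk] .
  have iso: "isometry FC (K, F, kc)"
    unfolding isometry_def
  proof
    show "(K, F, kc) \<in> c_arr FC" using FCs.hom_arr[OF kh] .
    show "c_comp FC (c_star FC (K, F, kc)) (K, F, kc) = c_id FC (c_dom FC (K, F, kc))"
    proof (simp only: FC_dom, rule FC_hom_eq[OF FCs.comp_hom[OF kh FC_star_hom[OF kh]] FC_id_hom[OF Ksf]])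
      fix X assume X: "X \<in> c_obj C"
      show "cmp (c_comp FC (c_star FC (K, F, kc)) (K, F, kc)) X = cmp (c_id FC K) X"
        using cmp_comp[OF kh FC_star_hom[OF kh] X] cmp_star[OF kh X] cmp_id[OF X] kfi[OF X] Kfst[OF X] X kc_def
        by simp
    qed
  qed
  show ?thesis using kh isk iso pk by blast
qed

end

context fcat_ph
begin

lemma FC_has_bp:
  assumes F: "star_functor C D F" and G: "star_functor C D G"
  shows "\<exists>H s1 r1 s2 r2. orthonormal_biproduct FC F G H s1 r1 s2 r2 \<and>
    (\<forall>X\<in>c_obj C. orthonormal_biproduct D (fst F X) (fst G X) (fst H X) (cmp s1 X) (cmp r1 X) (cmp s2 X) (cmp r2 X))"
proof -
  obtain B t1 q1 t2 q2 where bp: "\<And>X. X \<in> c_obj C \<Longrightarrow>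
      orthonormal_biproduct D (fst F X) (fst G X) (B X) (t1 X) (q1 X) (t2 X) (q2 X)"
  proof -
    have "\<forall>X\<in>c_obj C. \<exists>b. orthonormal_biproduct D (fst F X) (fst G X) (fst b) (fst (snd b))
        (fst (snd (snd b))) (fst (snd (snd (snd b)))) (snd (snd (snd (snd b))))"
    proof
      fix X assume X: "X \<in> c_obj C"
      obtain P s1 r1 s2 r2 where "orthonormal_biproduct D (fst F X) (fst G X) P s1 r1 s2 r2"
        using ph sf_obj[OF F X] sf_obj[OF G X] unfolding pre_hilbert_def by blast
      then show "\<exists>b. orthonormal_biproduct D (fst F X) (fst G X) (fst b) (fst (snd b))
        (fst (snd (snd b))) (fst (snd (snd (snd b)))) (snd (snd (snd (snd b))))"
        by (intro exI[of _ "(P, s1, r1, s2, r2)"]) simp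
    qed
    then obtain bf where "\<forall>X\<in>c_obj C. orthonormal_biproduct D (fst F X) (fst G X) (fst (bf X)) (fst (snd (bf X)))
        (fst (snd (snd (bf X)))) (fst (snd (snd (snd (bf X))))) (snd (snd (snd (snd (bf X)))))"
      by (metis bchoice)
    then show ?thesis using that[of "\<lambda>X. fst (bf X)" "\<lambda>X. fst (snd (bf X))" "\<lambda>X. fst (snd (snd (bf X)))"
        "\<lambda>X. fst (snd (snd (snd (bf X))))" "\<lambda>X. snd (snd (snd (snd (bf X))))"] by blast
  qed
  have bpb: "biproduct D (fst F X) (fst G X) (B X) (t1 X) (q1 X) (t2 X) (q2 X)" if "X \<in> c_obj C" for X
    using bp[OF that] unfolding orthonormal_biproduct_def by blast
  have qt: "q1 X = c_star D (t1 X)" "q2 X = c_star D (t2 X)" if "X \<in> c_obj C" for X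
    using bp[OF that] unfolding orthonormal_biproduct_def by blast+
  note bh = Ds.bp_homs[OF bpb]
  have tq: "c_star D (q1 X) = t1 X" "c_star D (q2 X) = t2 X" if X: "X \<in> c_obj C" for X
    using qt[OF X] Ds.star_star[OF bh(1)[OF X]] Ds.star_star[OF bh(3)[OF X]] by simp_all
  define H where "H = (\<lambda>X. if X \<in> c_obj C then B X else undefined,
     \<lambda>f. if f \<in> c_arr C then (THE h. h \<in> hom D (B (c_dom C f)) (B (c_cod C f)) \<and>
        c_comp D (q1 (c_cod C f)) h = c_comp D (snd F f) (q1 (c_dom C f)) \<and>
        c_comp D (q2 (c_cod C f)) h = c_comp D (snd G f) (q2 (c_dom C f))) else undefined)"
  have Hfst: "fst H X = B X" if "X \<in> c_obj C" for X using that H_def by simp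
  have Hf: "snd H f \<in> hom D (B X) (B Y) \<and> c_comp D (q1 Y) (snd H f) = c_comp D (snd F f) (q1 X) \<and>
      c_comp D (q2 Y) (snd H f) = c_comp D (snd G f) (q2 X)"
    if f: "f \<in> hom C X Y" for f X Y
  proof -
    have XY: "X \<in> c_obj C" "Y \<in> c_obj C" using Cs.hom_objs[OF f] by auto
    have a: "c_comp D (snd F f) (q1 X) \<in> hom D (B X) (fst F Y)"
      using Ds.comp_hom[OF bh(2)[OF XY(1)] sf_hom[OF F f]] .
    have b: "c_comp D (snd G f) (q2 X) \<in> hom D (B X) (fst G Y)"
      using Ds.comp_hom[OF bh(4)[OF XY(1)] sf_hom[OF G f]] .
    show ?thesis using Ds.bp_the_pair[OF bpb[OF XY(2)] a b]
      using Cs.hom_arr[OF f] Cs.hom_dom[OF f] Cs.hom_cod[OF f] H_def by simp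
  qed
  have gen: "c_comp D (qq Y) (c_comp D a (snd W f)) = c_comp D (qq Y) (c_comp D (snd H f) b)"
    if qq: "\<And>X. X \<in> c_obj C \<Longrightarrow> qq X \<in> hom D (B X) (fst FF X)"
      and FF: "star_functor C D FF" and W: "star_functor C D W"
      and qn: "\<And>f X Y. f \<in> hom C X Y \<Longrightarrow> c_comp D (qq Y) (snd H f) = c_comp D (snd FF f) (qq X)"
      and f: "f \<in> hom C X Y" and a: "a \<in> hom D (fst W Y) (B Y)" and b: "b \<in> hom D (fst W X) (B X)"
      and n: "c_comp D (c_comp D (qq Y) a) (snd W f) = c_comp D (snd FF f) (c_comp D (qq X) b)"
    for qq FF W f X Y a b
  proof -
    have XY: "X \<in> c_obj C" "Y \<in> c_obj C" using Cs.hom_objs[OF f] by auto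
    have Wf: "snd W f \<in> hom D (fst W X) (fst W Y)" using sf_hom[OF W f] .
    have FFf: "snd FF f \<in> hom D (fst FF X) (fst FF Y)" using sf_hom[OF FF f] .
    have Hf': "snd H f \<in> hom D (B X) (B Y)" using Hf[OF f] by simp
    have "c_comp D (qq Y) (c_comp D a (snd W f)) = c_comp D (c_comp D (qq Y) a) (snd W f)"
      using Ds.assoc[OF Wf a qq[OF XY(2)]] .
    also have "\<dots> = c_comp D (snd FF f) (c_comp D (qq X) b)" using n .
    also have "\<dots> = c_comp D (c_comp D (snd FF f) (qq X)) b" using Ds.assoc[OF b qq[OF XY(1)] FFf] .
    also have "\<dots> = c_comp D (c_comp D (qq Y) (snd H f)) b" using qn[OF f] by simp
    also have "\<dots> = c_comp D (qq Y) (c_comp D (snd H f) b)" using Ds.assoc[OF b Hf' qq[OF XY(2)]] by simp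
    finally show ?thesis .
  qed
  have q1h: "q1 X \<in> hom D (B X) (fst F X)" if "X \<in> c_obj C" for X using bh(2)[OF that] .
  have q2h: "q2 X \<in> hom D (B X) (fst G X)" if "X \<in> c_obj C" for X using bh(4)[OF that] .
  have q1n: "c_comp D (q1 Y) (snd H f) = c_comp D (snd F f) (q1 X)" if "f \<in> hom C X Y" for f X Y
    using Hf[OF that] by simp
  have q2n: "c_comp D (q2 Y) (snd H f) = c_comp D (snd G f) (q2 X)" if "f \<in> hom C X Y" for f X Y
    using Hf[OF that] by simp
  have Hsf: "star_functor C D H"
  proof (rule sf_intro)
    fix X assume X: "X \<in> c_obj C"
    show "fst H X \<in> c_obj D" using Hfst[OF X] Ds.hom_objs[OF bh(1)[OF X]] by simp
    have i: "c_id C X \<in> hom C X X" using Cs.id_hom[OF X] .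
    have BX: "B X \<in> c_obj D" using Ds.hom_objs[OF bh(1)[OF X]] by simp
    show "snd H (c_id C X) = c_id D (fst H X)" unfolding Hfst[OF X]
    proof (rule Ds.bp_jmono[OF bpb[OF X] conjunct1[OF Hf[OF i]] Ds.id_hom[OF BX]])
      show "c_comp D (q1 X) (snd H (c_id C X)) = c_comp D (q1 X) (c_id D (B X))"
        using Hf[OF i] sf_id[OF F X] Ds.id_l[OF q1h[OF X]] Ds.id_r[OF q1h[OF X]] by simp
      show "c_comp D (q2 X) (snd H (c_id C X)) = c_comp D (q2 X) (c_id D (B X))"
        using Hf[OF i] sf_id[OF G X] Ds.id_l[OF q2h[OF X]] Ds.id_r[OF q2h[OF X]] by simp
    qed
  next
    fix f X Y assume f: "f \<in> hom C X Y"
    have XY: "X \<in> c_obj C" "Y \<in> c_obj C" using Cs.hom_objs[OF f] by auto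
    show "snd H f \<in> hom D (fst H X) (fst H Y)" using Hf[OF f] Hfst XY by simp
    have fs: "c_star C f \<in> hom C Y X" using Cs.star_hom[OF f] .
    have sm: "c_comp D (q1 X) (c_star D (snd H f)) = c_comp D (c_star D (snd F f)) (q1 Y) \<and>
       c_comp D (q2 X) (c_star D (snd H f)) = c_comp D (c_star D (snd G f)) (q2 Y)"
      using Ds.bp_star_map[OF bp[OF XY(1)] bp[OF XY(2)] conjunct1[OF Hf[OF f]] sf_hom[OF F f] sf_hom[OF G f]]
        Hf[OF f] by simp
    show "snd H (c_star C f) = c_star D (snd H f)"
    proof (rule Ds.bp_jmono[OF bpb[OF XY(1)] conjunct1[OF Hf[OF fs]] Ds.star_hom[OF conjunct1[OF Hf[OF f]]]])
      show "c_comp D (q1 X) (snd H (c_star C f)) = c_comp D (q1 X) (c_star D (snd H f))"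
        using Hf[OF fs] sm sf_star[OF F Cs.hom_arr[OF f]] by simp
      show "c_comp D (q2 X) (snd H (c_star C f)) = c_comp D (q2 X) (c_star D (snd H f))"
        using Hf[OF fs] sm sf_star[OF G Cs.hom_arr[OF f]] by simp
    qed
  next
    fix f g X Y Z assume f: "f \<in> hom C X Y" and g: "g \<in> hom C Y Z"
    have XYZ: "X \<in> c_obj C" "Y \<in> c_obj C" "Z \<in> c_obj C" using Cs.hom_objs[OF f] Cs.hom_objs[OF g] by auto
    have gf: "c_comp C g f \<in> hom C X Z" using Cs.comp_hom[OF f g] .
    note a = Hf[OF f] and b = Hf[OF g] and c = Hf[OF gf]
    have e: "c_comp D (qq Z) (c_comp D (snd H g) (snd H f)) = c_comp D (qq Z) (snd H (c_comp C g f))"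
      if qq: "\<And>X. X \<in> c_obj C \<Longrightarrow> qq X \<in> hom D (B X) (fst FF X)" and FF: "star_functor C D FF"
      and qn: "\<And>f X Y. f \<in> hom C X Y \<Longrightarrow> c_comp D (qq Y) (snd H f) = c_comp D (snd FF f) (qq X)" for qq FF
    proof -
      have Ff: "snd FF f \<in> hom D (fst FF X) (fst FF Y)" using sf_hom[OF FF f] .
      have Fg: "snd FF g \<in> hom D (fst FF Y) (fst FF Z)" using sf_hom[OF FF g] .
      have "c_comp D (qq Z) (c_comp D (snd H g) (snd H f)) = c_comp D (c_comp D (qq Z) (snd H g)) (snd H f)"
        using Ds.assoc[OF conjunct1[OF a] conjunct1[OF b] qq[OF XYZ(3)]] .
      also have "\<dots> = c_comp D (c_comp D (snd FF g) (qq Y)) (snd H f)" using qn[OF g] by simp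
      also have "\<dots> = c_comp D (snd FF g) (c_comp D (qq Y) (snd H f))"
        using Ds.assoc[OF conjunct1[OF a] qq[OF XYZ(2)] Fg] by simp
      also have "\<dots> = c_comp D (snd FF g) (c_comp D (snd FF f) (qq X))" using qn[OF f] by simp
      also have "\<dots> = c_comp D (c_comp D (snd FF g) (snd FF f)) (qq X)"
        using Ds.assoc[OF qq[OF XYZ(1)] Ff Fg] .
      also have "\<dots> = c_comp D (qq Z) (snd H (c_comp C g f))" using qn[OF gf] sf_comp[OF FF f g] by simp
      finally show ?thesis .
    qed
    show "snd H (c_comp C g f) = c_comp D (snd H g) (snd H f)"
      by (rule Ds.bp_jmono[OF bpb[OF XYZ(3)] conjunct1[OF c] Ds.comp_hom[OF conjunct1[OF a] conjunct1[OF b]]])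
        (use e[OF q1h F q1n] e[OF q2h G q2n] in simp_all)
  qed (auto simp: H_def)
  define c1 where "c1 = (\<lambda>X. if X \<in> c_obj C then q1 X else undefined)"
  define c2 where "c2 = (\<lambda>X. if X \<in> c_obj C then q2 X else undefined)"
  have r1h: "(H, F, c1) \<in> hom FC H F"
    unfolding FC_hom3
  proof (intro conjI refl Hsf F nt_intro)
    fix X assume X: "X \<in> c_obj C"
    show "c1 X \<in> hom D (fst H X) (fst F X)" using q1h[OF X] Hfst[OF X] X c1_def by simp
  next
    fix f X Y assume f: "f \<in> hom C X Y"
    have XY: "X \<in> c_obj C" "Y \<in> c_obj C" using Cs.hom_objs[OF f] by auto
    show "c_comp D (c1 Y) (snd H f) = c_comp D (snd F f) (c1 X)" using q1n[OF f] XY c1_def by simp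
  qed (simp add: c1_def)
  have r2h: "(H, G, c2) \<in> hom FC H G"
    unfolding FC_hom3
  proof (intro conjI refl Hsf G nt_intro)
    fix X assume X: "X \<in> c_obj C"
    show "c2 X \<in> hom D (fst H X) (fst G X)" using q2h[OF X] Hfst[OF X] X c2_def by simp
  next
    fix f X Y assume f: "f \<in> hom C X Y"
    have XY: "X \<in> c_obj C" "Y \<in> c_obj C" using Cs.hom_objs[OF f] by auto
    show "c_comp D (c2 Y) (snd H f) = c_comp D (snd G f) (c2 X)" using q2n[OF f] XY c2_def by simp
  qed (simp add: c2_def)
  define r1 where "r1 = (H, F, c1)"
  define r2 where "r2 = (H, G, c2)"
  define s1 where "s1 = c_star FC r1"
  define s2 where "s2 = c_star FC r2"
  have s1h: "s1 \<in> hom FC F H" using FC_star_hom[OF r1h] s1_def r1_def by simp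
  have s2h: "s2 \<in> hom FC G H" using FC_star_hom[OF r2h] s2_def r2_def by simp
  have r1s: "r1 = c_star FC s1" using FC_star_star[OF r1h] s1_def r1_def by simp
  have r2s: "r2 = c_star FC s2" using FC_star_star[OF r2h] s2_def r2_def by simp
  have cr1: "cmp r1 X = q1 X" and cr2: "cmp r2 X = q2 X" if "X \<in> c_obj C" for X
    using that r1_def r2_def c1_def c2_def by simp_all
  have cs1: "cmp s1 X = t1 X" and cs2: "cmp s2 X = t2 X" if X: "X \<in> c_obj C" for X
    using cmp_star[OF r1h X] cmp_star[OF r2h X] tq[OF X] X s1_def s2_def r1_def r2_def c1_def c2_def by simp_all
  have r1h': "r1 \<in> hom FC H F" and r2h': "r2 \<in> hom FC H G" using r1h r2h r1_def r2_def by simp_all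
  have e1: "c_comp FC r1 s1 = c_id FC F"
    by (rule FC_hom_eq[OF FCs.comp_hom[OF s1h r1h'] FC_id_hom[OF F]])
      (simp add: cmp_comp[OF s1h r1h'] cmp_id cr1 cs1 bh(5))
  have e2: "c_comp FC r2 s2 = c_id FC G"
    by (rule FC_hom_eq[OF FCs.comp_hom[OF s2h r2h'] FC_id_hom[OF G]])
      (simp add: cmp_comp[OF s2h r2h'] cmp_id cr2 cs2 bh(6))
  have z1: "zero_arr FC (c_comp FC r2 s1)"
    using FC_zero_iff[OF FCs.comp_hom[OF s1h r2h']] cmp_comp[OF s1h r2h'] cr2 cs1 bh(7) by simp
  have z2: "zero_arr FC (c_comp FC r1 s2)"
    using FC_zero_iff[OF FCs.comp_hom[OF s2h r1h']] cmp_comp[OF s2h r1h'] cr1 cs2 bh(8) by simp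
  have prod: "\<exists>!h. h \<in> hom FC W H \<and> c_comp FC r1 h = f1 \<and> c_comp FC r2 h = f2"
    if f1: "f1 \<in> hom FC W F" and f2: "f2 \<in> hom FC W G" for W f1 f2
  proof -
    have Wsf: "star_functor C D W" using FC_hom_sf[OF f1] by simp
    have a1: "cmp f1 X \<in> hom D (fst W X) (fst F X)" if "X \<in> c_obj C" for X using cmp_hom[OF f1 that] .
    have a2: "cmp f2 X \<in> hom D (fst W X) (fst G X)" if "X \<in> c_obj C" for X using cmp_hom[OF f2 that] .
    define hc where "hc = (\<lambda>X. if X \<in> c_obj C then (THE h. h \<in> hom D (fst W X) (B X) \<and>
        c_comp D (q1 X) h = cmp f1 X \<and> c_comp D (q2 X) h = cmp f2 X) else undefined)"
    have hc: "hc X \<in> hom D (fst W X) (B X) \<and> c_comp D (q1 X) (hc X) = cmp f1 X \<and> c_comp D (q2 X) (hc X) = cmp f2 X"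
      if X: "X \<in> c_obj C" for X
      using Ds.bp_the_pair[OF bpb[OF X] a1[OF X] a2[OF X]] X hc_def by simp
    obtain \<alpha> where \<alpha>: "f1 = (W, F, \<alpha>)" "nat_trans C D W F \<alpha>" using FC_homE[OF f1] by blast
    obtain \<beta> where \<beta>: "f2 = (W, G, \<beta>)" "nat_trans C D W G \<beta>" using FC_homE[OF f2] by blast
    have hh: "(W, H, hc) \<in> hom FC W H"
      unfolding FC_hom3
    proof (intro conjI refl Wsf Hsf nt_intro)
      fix X assume X: "X \<in> c_obj C" show "hc X \<in> hom D (fst W X) (fst H X)" using hc[OF X] Hfst[OF X] by simp
    next
      fix f X Y assume f: "f \<in> hom C X Y"
      have XY: "X \<in> c_obj C" "Y \<in> c_obj C" using Cs.hom_objs[OF f] by auto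
      note hX = hc[OF XY(1)] and hY = hc[OF XY(2)]
      have n1: "c_comp D (c_comp D (q1 Y) (hc Y)) (snd W f) = c_comp D (snd F f) (c_comp D (q1 X) (hc X))"
        using hX hY nt_nat[OF \<alpha>(2) f] \<alpha>(1) by simp
      have n2: "c_comp D (c_comp D (q2 Y) (hc Y)) (snd W f) = c_comp D (snd G f) (c_comp D (q2 X) (hc X))"
        using hX hY nt_nat[OF \<beta>(2) f] \<beta>(1) by simp
      show "c_comp D (hc Y) (snd W f) = c_comp D (snd H f) (hc X)"
        by (rule Ds.bp_jmono[OF bpb[OF XY(2)] Ds.comp_hom[OF sf_hom[OF Wsf f] conjunct1[OF hY]]
              Ds.comp_hom[OF conjunct1[OF hX] conjunct1[OF Hf[OF f]]]])
          (use gen[OF q1h F Wsf q1n f conjunct1[OF hY] conjunct1[OF hX] n1]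
               gen[OF q2h G Wsf q2n f conjunct1[OF hY] conjunct1[OF hX] n2] in simp_all)
    qed (simp add: hc_def)
    have p1: "c_comp FC r1 (W, H, hc) = f1"
      by (rule FC_hom_eq[OF FCs.comp_hom[OF hh r1h'] f1]) (simp add: cmp_comp[OF hh r1h'] cr1 hc)
    have p2: "c_comp FC r2 (W, H, hc) = f2"
      by (rule FC_hom_eq[OF FCs.comp_hom[OF hh r2h'] f2]) (simp add: cmp_comp[OF hh r2h'] cr2 hc)
    show ?thesis
    proof (rule ex1I[of _ "(W, H, hc)"])
      show "(W, H, hc) \<in> hom FC W H \<and> c_comp FC r1 (W, H, hc) = f1 \<and> c_comp FC r2 (W, H, hc) = f2"
        using hh p1 p2 by simp
      fix h assume h: "h \<in> hom FC W H \<and> c_comp FC r1 h = f1 \<and> c_comp FC r2 h = f2"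
      show "h = (W, H, hc)"
      proof (rule FC_hom_eq[OF conjunct1[OF h] hh])
        fix X assume X: "X \<in> c_obj C"
        have hX: "cmp h X \<in> hom D (fst W X) (B X)" using cmp_hom[OF conjunct1[OF h] X] Hfst[OF X] by simp
        have "c_comp D (q1 X) (cmp h X) = cmp f1 X" using cmp_comp[OF conjunct1[OF h] r1h' X] h cr1[OF X] by simp
        moreover have "c_comp D (q2 X) (cmp h X) = cmp f2 X" using cmp_comp[OF conjunct1[OF h] r2h' X] h cr2[OF X] by simp
        ultimately have "cmp h X = hc X"
          using Ds.bp_jmono[OF bpb[OF X] hX conjunct1[OF hc[OF X]]] hc[OF X] by simp
        then show "cmp h X = cmp (W, H, hc) X" by simp
      qed
    qed
  qed
  have orth: "orthonormal_biproduct FC F G H s1 r1 s2 r2"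
    by (rule FCs.orth_from_prod[OF s1h s2h r1s r2s e1 e2 z1 z2 prod])
  have pw: "\<forall>X\<in>c_obj C. orthonormal_biproduct D (fst F X) (fst G X) (fst H X) (cmp s1 X) (cmp r1 X) (cmp s2 X) (cmp r2 X)"
    using bp Hfst cs1 cs2 cr1 cr2 by simp
  show ?thesis using orth pw by blast
qed

end

context fcat_ph
begin

lemma FC_R4:
  assumes Fo: "F \<in> c_obj FC" and P: "orthonormal_biproduct FC F F P s1 r1 s2 r2" and d: "d \<in> hom FC F P"
    and d1: "c_comp FC r1 d = c_id FC F" and d2: "c_comp FC r2 d = c_id FC F"
  shows "normal_mono FC d"
proof -
  have F: "star_functor C D F" using Fo FC_obj by simp
  have Pb: "biproduct FC F F P s1 r1 s2 r2" and rs: "r1 = c_star FC s1" "r2 = c_star FC s2"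
    using P unfolding orthonormal_biproduct_def by auto
  obtain Q t1 q1 t2 q2 where Q: "orthonormal_biproduct FC F F Q t1 q1 t2 q2"
    and pw: "\<forall>X\<in>c_obj C. orthonormal_biproduct D (fst F X) (fst F X) (fst Q X) (cmp t1 X) (cmp q1 X) (cmp t2 X) (cmp q2 X)"
    using FC_has_bp[OF F F] by blast
  have Qb: "biproduct FC F F Q t1 q1 t2 q2" using Q unfolding orthonormal_biproduct_def by auto
  note Ph = FCs.bp_homs[OF Pb] and Qh = FCs.bp_homs[OF Qb]
  obtain \<phi> \<psi> where \<phi>: "\<phi> \<in> hom FC P Q" and \<psi>: "\<psi> \<in> hom FC Q P"
    and pp: "c_comp FC \<psi> \<phi> = c_id FC P" and qq: "c_comp FC \<phi> \<psi> = c_id FC Q"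
    and e1: "c_comp FC q1 \<phi> = r1" and e2: "c_comp FC q2 \<phi> = r2"
    and e3: "c_comp FC \<psi> t1 = s1" and e4: "c_comp FC \<psi> t2 = s2"
    using FCs.bp_iso[OF Pb Qb] by blast
  have dX: "normal_mono D (cmp d X)" if X: "X \<in> c_obj C" for X
  proof -
    have Qx: "biproduct D (fst F X) (fst F X) (fst Q X) (cmp t1 X) (cmp q1 X) (cmp t2 X) (cmp q2 X)"
      using pw X unfolding orthonormal_biproduct_def by blast
    have bpx: "biproduct D (fst F X) (fst F X) (fst P X) (cmp s1 X) (cmp r1 X) (cmp s2 X) (cmp r2 X)"
    proof (rule Ds.bp_transfer[OF Qx cmp_hom[OF \<phi> X] cmp_hom[OF \<psi> X]])
      show "c_comp D (cmp \<psi> X) (cmp \<phi> X) = c_id D (fst P X)" using cmp_comp[OF \<phi> \<psi> X] pp cmp_id[OF X] by simp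
      show "c_comp D (cmp \<phi> X) (cmp \<psi> X) = c_id D (fst Q X)" using cmp_comp[OF \<psi> \<phi> X] qq cmp_id[OF X] by simp
      show "c_comp D (cmp q1 X) (cmp \<phi> X) = cmp r1 X" using cmp_comp[OF \<phi> Qh(2) X] e1 by simp
      show "c_comp D (cmp q2 X) (cmp \<phi> X) = cmp r2 X" using cmp_comp[OF \<phi> Qh(4) X] e2 by simp
      show "c_comp D (cmp \<psi> X) (cmp t1 X) = cmp s1 X" using cmp_comp[OF Qh(1) \<psi> X] e3 by simp
      show "c_comp D (cmp \<psi> X) (cmp t2 X) = cmp s2 X" using cmp_comp[OF Qh(3) \<psi> X] e4 by simp
    qed
    have ox: "orthonormal_biproduct D (fst F X) (fst F X) (fst P X) (cmp s1 X) (cmp r1 X) (cmp s2 X) (cmp r2 X)"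
      unfolding orthonormal_biproduct_def using bpx cmp_star[OF Ph(1) X] cmp_star[OF Ph(3) X] rs by simp
    have dh: "cmp d X \<in> hom D (fst F X) (fst P X)" using cmp_hom[OF d X] .
    have i1: "c_comp D (cmp r1 X) (cmp d X) = c_id D (fst F X)" using cmp_comp[OF d Ph(2) X] d1 cmp_id[OF X] by simp
    have i2: "c_comp D (cmp r2 X) (cmp d X) = c_id D (fst F X)" using cmp_comp[OF d Ph(4) X] d2 cmp_id[OF X] by simp
    have R4: "\<forall>X\<in>c_obj D. \<forall>P s1 r1 s2 r2 d.
        orthonormal_biproduct D X X P s1 r1 s2 r2 \<longrightarrow> d \<in> hom D X P \<longrightarrow>
        c_comp D r1 d = c_id D X \<longrightarrow> c_comp D r2 d = c_id D X \<longrightarrow> normal_mono D d"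
      using ph unfolding pre_hilbert_def by (elim conjE)
    show ?thesis using R4 sf_obj[OF F X] ox dh i1 i2 by blast
  qed
  obtain K k where k: "k \<in> hom FC K P" and kp: "\<forall>X\<in>c_obj C. is_kernel D (cmp (c_star FC d) X) (cmp k X)"
    using FC_has_kernel[OF FC_star_hom[OF d]] by blast
  have eh: "c_star FC k \<in> hom FC P K" using FC_star_hom[OF k] .
  have pk: "is_kernel D (cmp (c_star FC k) X) (cmp d X)" if X: "X \<in> c_obj C" for X
  proof -
    have "is_kernel D (cmp (c_star FC d) X) (cmp k X)" using kp X by blast
    then have "is_kernel D (c_star D (cmp d X)) (cmp k X)" using cmp_star[OF d X] by simp
    from Ds.normal_mono_kernel[OF dX[OF X] this] show ?thesis using cmp_star[OF k X] by simp
  qed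
  have "is_kernel FC (c_star FC k) d" using FC_kernel[OF eh d pk] .
  then show ?thesis unfolding normal_mono_def by blast
qed

end

theorem proposition2p5:
  fixes C :: "('o1, 'a1) star_cat" and D :: "('o2, 'a2) star_cat"
  assumes "star_category C" and "star_category D" and "pre_hilbert D"
  shows "pre_hilbert (functor_star_cat C D)"
proof -
  interpret fcat_ph C D
    using assms by (simp add: fcat_ph_def fcat_def fcat_ph_axioms_def)
  have c1: "star_category FC" by (rule FC_star_category)
  have c2: "\<exists>Z. zero_obj FC Z" using Z0_zero by blast
  have c3: "\<forall>X1 \<in> c_obj FC. \<forall>X2 \<in> c_obj FC. \<exists>X s1 r1 s2 r2. orthonormal_biproduct FC X1 X2 X s1 r1 s2 r2"
  proof (intro ballI)
    fix X1 X2 assume "X1 \<in> c_obj FC" "X2 \<in> c_obj FC"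
    then have "star_functor C D X1" "star_functor C D X2" using FC_obj by auto
    then show "\<exists>X s1 r1 s2 r2. orthonormal_biproduct FC X1 X2 X s1 r1 s2 r2" using FC_has_bp by blast
  qed
  have c4: "\<forall>f \<in> c_arr FC. \<exists>k. is_kernel FC f k \<and> isometry FC k"
  proof
    fix f assume "f \<in> c_arr FC"
    then obtain F G \<sigma> where "f \<in> hom FC F G" by (rule FC_arrE)
    then show "\<exists>k. is_kernel FC f k \<and> isometry FC k" using FC_has_kernel by blast
  qed
  have c5: "\<forall>X \<in> c_obj FC. \<forall>P s1 r1 s2 r2 d.
        orthonormal_biproduct FC X X P s1 r1 s2 r2 \<longrightarrow> d \<in> hom FC X P \<longrightarrow>
        c_comp FC r1 d = c_id FC X \<longrightarrow> c_comp FC r2 d = c_id FC X \<longrightarrow> normal_mono FC d"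
    using FC_R4 by blast
  show ?thesis unfolding pre_hilbert_def by (intro conjI c1 c2 c3 c4 c5)
qed

end
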